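(* If a finitely generated residually finite group $\Gamma$ is presentable by a product, then its rank gradient vanishes: $\mathrm{RG}(\Gamma)=0$.
   Context: For a finitely generated group $\Gamma$ let $d(\Gamma)$ be the minimal number of generators. The rank gradient is $\mathrm{RG}(\Gamma)=\inf_{\Gamma'}\frac{d(\Gamma')-1}{[\Gamma:\Gamma']}$, the infimum taken over all finite index subgroups $\Gamma'\subset\Gamma$. An infinite group $\Gamma$ is presentable by a product if there exist groups $\Gamma_1,\Gamma_2$ and a homomorphism $\varphi\colon\Gamma_1\times\Gamma_2\to\Gamma$ whose image has finite index in $\Gamma$ and such that both $\varphi(\Gamma_1)$ and $\varphi(\Gamma_2)$ are infinite. *)

theory Defs
  imports "HOL-Algebra.Algebra"
begin

definition finitely_generated :: "('a, 'b) monoid_scheme \<Rightarrow> bool" where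
  "finitely_generated G \<longleftrightarrow>
     (\<exists>S. finite S \<and> S \<subseteq> carrier G \<and> generate G S = carrier G)"

definition finite_index_subgroup :: "('a, 'b) monoid_scheme \<Rightarrow> 'a set \<Rightarrow> bool" where
  "finite_index_subgroup G H \<longleftrightarrow> subgroup H G \<and> finite (rcosets\<^bsub>G\<^esub> H)"

definition group_index :: "('a, 'b) monoid_scheme \<Rightarrow> 'a set \<Rightarrow> nat" where
  "group_index G H = card (rcosets\<^bsub>G\<^esub> H)"

definition min_generators :: "('a, 'b) monoid_scheme \<Rightarrow> 'a set \<Rightarrow> nat" where
  "min_generators G H =
     (LEAST n. \<exists>S. finite S \<and> S \<subseteq> H \<and> card S = n \<and> generate G S = H)"

definition residually_finite :: "('a, 'b) monoid_scheme \<Rightarrow> bool" where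
  "residually_finite G \<longleftrightarrow>
     (\<forall>g \<in> carrier G. g \<noteq> \<one>\<^bsub>G\<^esub> \<longrightarrow>
        (\<exists>N. N \<lhd> G \<and> finite (rcosets\<^bsub>G\<^esub> N) \<and> g \<notin> N))"

definition rank_gradient :: "('a, 'b) monoid_scheme \<Rightarrow> real" where
  "rank_gradient G =
     Inf {(real (min_generators G H) - 1) / real (group_index G H) | H. finite_index_subgroup G H}"

definition presentable_by_product_via ::
  "('a, 'b) monoid_scheme \<Rightarrow> ('c, 'd) monoid_scheme \<Rightarrow> ('e, 'f) monoid_scheme
     \<Rightarrow> ('c \<times> 'e \<Rightarrow> 'a) \<Rightarrow> bool" where
  "presentable_by_product_via G G1 G2 phi \<longleftrightarrow>
     infinite (carrier G) \<and> group G1 \<and> group G2 \<and>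
     phi \<in> hom (G1 \<times>\<times> G2) G \<and>
     finite_index_subgroup G (phi ` carrier (G1 \<times>\<times> G2)) \<and>
     infinite (phi ` (carrier G1 \<times> {\<one>\<^bsub>G2\<^esub>})) \<and>
     infinite (phi ` ({\<one>\<^bsub>G1\<^esub>} \<times> carrier G2))"

end

theory Submission
  imports Defs
begin

context group begin

lemma inv_cancel_left' [simp]: "x \<in> carrier G \<Longrightarrow> y \<in> carrier G \<Longrightarrow> inv x \<otimes> (x \<otimes> y) = y"
  by (simp add: m_assoc[symmetric])

lemma inv_cancel_left'' [simp]: "x \<in> carrier G \<Longrightarrow> y \<in> carrier G \<Longrightarrow> x \<otimes> (inv x \<otimes> y) = y"
  by (simp add: m_assoc[symmetric])

lemma rcos_eq_iff:
  assumes "subgroup H G" "x \<in> carrier G" "y \<in> carrier G"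
  shows "(H #> x = H #> y) \<longleftrightarrow> x \<otimes> inv y \<in> H"
proof
  assume "H #> x = H #> y"
  then have "x \<in> H #> y" using rcos_self[OF assms(2,1)] by simp
  then show "x \<otimes> inv y \<in> H" using subgroup.rcos_module_imp[OF assms(1) is_group assms(3)] by blast
next
  assume "x \<otimes> inv y \<in> H"
  then have "x \<in> H #> y" using subgroup.rcos_module_rev[OF assms(1) is_group assms(3,2)] by blast
  then show "H #> x = H #> y" using repr_independence[OF _ assms(3,1)] by metis
qed

lemma fin_index_cover:
  assumes H: "subgroup H G" and F: "finite F" "F \<subseteq> carrier G"
    and cov: "\<And>g. g \<in> carrier G \<Longrightarrow> \<exists>f\<in>F. g \<otimes> inv f \<in> H"
  shows "finite (rcosets H)"
proof -
  have "rcosets H \<subseteq> (\<lambda>f. H #> f) ` F"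
  proof
    fix C0 assume "C0 \<in> rcosets H"
    then obtain g where g: "g \<in> carrier G" "C0 = H #> g" unfolding RCOSETS_def by blast
    obtain f where f: "f \<in> F" "g \<otimes> inv f \<in> H" using cov[OF g(1)] by blast
    have "H #> g = H #> f" using rcos_eq_iff[OF H g(1)] f F by blast
    then show "C0 \<in> (\<lambda>f. H #> f) ` F" using g f by blast
  qed
  then show ?thesis using F finite_subset by blast
qed

lemma card_le_index:
  assumes H: "subgroup H G" and fin: "finite (rcosets H)" and T: "T \<subseteq> carrier G"
    and sep: "\<And>t1 t2. t1 \<in> T \<Longrightarrow> t2 \<in> T \<Longrightarrow> t1 \<otimes> inv t2 \<in> H \<Longrightarrow> t1 = t2"
  shows "finite T \<and> card T \<le> card (rcosets H)"
proof -
  have inj: "inj_on (\<lambda>t. H #> t) T"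
    by (rule inj_onI) (metis rcos_eq_iff[OF H] T subsetD sep)
  have sub: "(\<lambda>t. H #> t) ` T \<subseteq> rcosets H" using T rcosetsI[OF subgroup.subset[OF H]] by blast
  have "finite T" using inj sub fin finite_imageD finite_subset by blast
  moreover have "card T \<le> card (rcosets H)"
    using card_inj_on_le[OF inj sub fin] .
  ultimately show ?thesis by blast
qed

lemma fin_index_inter:
  assumes H: "subgroup H G" "finite (rcosets H)" and K: "subgroup K G" "finite (rcosets K)"
  shows "finite (rcosets (H \<inter> K))"
proof -
  have HK: "subgroup (H \<inter> K) G" using H K subgroups_Inter_pair by blast
  let ?f = "\<lambda>g. (H #> g, K #> g)"
  have fin: "finite (?f ` carrier G)"
  proof (rule finite_subset[of _ "(rcosets H) \<times> (rcosets K)"])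
    show "?f ` carrier G \<subseteq> (rcosets H) \<times> (rcosets K)"
      using rcosetsI subgroup.subset H K by blast
  qed (use H K in auto)
  let ?r = "\<lambda>p. SOME g. g \<in> carrier G \<and> ?f g = p"
  have "rcosets (H \<inter> K) \<subseteq> (\<lambda>p. (H \<inter> K) #> ?r p) ` (?f ` carrier G)"
  proof
    fix C0 assume "C0 \<in> rcosets (H \<inter> K)"
    then obtain g where g: "g \<in> carrier G" "C0 = (H \<inter> K) #> g" unfolding RCOSETS_def by blast
    have "\<exists>g'. g' \<in> carrier G \<and> ?f g' = ?f g" using g by blast
    then have r: "?r (?f g) \<in> carrier G" "?f (?r (?f g)) = ?f g" by (metis (mono_tags, lifting) someI_ex)+
    have "g \<otimes> inv (?r (?f g)) \<in> H" "g \<otimes> inv (?r (?f g)) \<in> K"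
      using r g rcos_eq_iff H K by (metis (no_types, lifting) prod.inject)+
    then have "(H \<inter> K) #> g = (H \<inter> K) #> ?r (?f g)" using rcos_eq_iff[OF HK g(1) r(1)] by blast
    then show "C0 \<in> (\<lambda>p. (H \<inter> K) #> ?r p) ` (?f ` carrier G)" using g by blast
  qed
  then show ?thesis using fin finite_subset by blast
qed

end

lemma max_sep:
  fixes rel :: "'a \<Rightarrow> 'a \<Rightarrow> bool"
  assumes T0: "T0 \<subseteq> W" "finite T0" "\<forall>t1\<in>T0. \<forall>t2\<in>T0. rel t1 t2 \<longrightarrow> t1 = t2"
    and bound: "\<And>T. T \<subseteq> W \<Longrightarrow> finite T \<Longrightarrow> (\<forall>t1\<in>T. \<forall>t2\<in>T. rel t1 t2 \<longrightarrow> t1 = t2) \<Longrightarrow> card T \<le> M"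
    and sym: "\<And>x y. x \<in> W \<Longrightarrow> y \<in> W \<Longrightarrow> rel x y \<Longrightarrow> rel y x"
    and refl: "\<And>x. x \<in> W \<Longrightarrow> rel x x"
  shows "\<exists>T. T0 \<subseteq> T \<and> T \<subseteq> W \<and> finite T \<and> (\<forall>t1\<in>T. \<forall>t2\<in>T. rel t1 t2 \<longrightarrow> t1 = t2)
            \<and> (\<forall>w\<in>W. \<exists>t\<in>T. rel w t)"
proof -
  define S where "S = {T. T0 \<subseteq> T \<and> T \<subseteq> W \<and> finite T \<and> (\<forall>t1\<in>T. \<forall>t2\<in>T. rel t1 t2 \<longrightarrow> t1 = t2)}"
  have T0S: "T0 \<in> S" using T0 unfolding S_def by blast
  have finc: "finite (card ` S)"
    by (rule finite_subset[of _ "{..M}"]) (auto simp: S_def intro: bound)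
  define m where "m = Max (card ` S)"
  have "m \<in> card ` S" unfolding m_def using finc T0S by (intro Max_in) auto
  then obtain T where T: "T \<in> S" "card T = m" by blast
  have mx: "\<And>T'. T' \<in> S \<Longrightarrow> card T' \<le> m" unfolding m_def using finc by auto
  have "\<forall>w\<in>W. \<exists>t\<in>T. rel w t"
  proof (rule ccontr)
    assume "\<not> ?thesis"
    then obtain w where w: "w \<in> W" "\<forall>t\<in>T. \<not> rel w t" by blast
    have wT: "w \<notin> T" using w refl by blast
    have "insert w T \<in> S" unfolding S_def
    proof (intro CollectI conjI)
      show "\<forall>t1\<in>insert w T. \<forall>t2\<in>insert w T. rel t1 t2 \<longrightarrow> t1 = t2"
      proof (intro ballI impI)
        fix t1 t2 assume a: "t1 \<in> insert w T" "t2 \<in> insert w T" "rel t1 t2"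
        have TW: "T \<subseteq> W" and sT: "\<forall>t1\<in>T. \<forall>t2\<in>T. rel t1 t2 \<longrightarrow> t1 = t2" using T unfolding S_def by auto
        show "t1 = t2"
        proof (cases "t1 = w")
          case True
          then show ?thesis using a w by auto
        next
          case False
          then have t1T: "t1 \<in> T" using a by auto
          show ?thesis
          proof (cases "t2 = w")
            case True
            then have "rel w t1" using sym[of t1 w] a t1T TW w by auto
            then show ?thesis using w t1T by auto
          next
            case False
            then show ?thesis using a t1T sT by auto
          qed
        qed
      qed
    qed (use T w in \<open>auto simp: S_def\<close>)
    then have "card (insert w T) \<le> m" by (rule mx)
    moreover have "card (insert w T) = Suc m" using T wT unfolding S_def by auto
    ultimately show False by simp
  qed
  then show ?thesis using T unfolding S_def by blast
qed

context group begin

lemma schreier: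
  assumes S: "finite S" "S \<subseteq> carrier G"
    and H: "subgroup H G" "H \<subseteq> generate G S"
    and T: "finite T" "T \<subseteq> generate G S" "\<one> \<in> T"
    and cov: "\<And>x. x \<in> generate G S \<Longrightarrow> \<exists>t\<in>T. x \<otimes> inv t \<in> H"
    and sep: "\<And>t1 t2. t1 \<in> T \<Longrightarrow> t2 \<in> T \<Longrightarrow> t1 \<otimes> inv t2 \<in> H \<Longrightarrow> t1 = t2"
  shows "\<exists>Y. finite Y \<and> Y \<subseteq> H \<and> generate G Y = H \<and> card Y \<le> card T * (2 * card S)"
proof -
  let ?A = "generate G S"
  have Acar: "?A \<subseteq> carrier G" using generate_incl[OF S(2)] .
  have Asg: "subgroup ?A G" using generate_is_subgroup[OF S(2)] .
  have Hcar: "H \<subseteq> carrier G" using subgroup.subset[OF H(1)] .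
  have Tcar: "T \<subseteq> carrier G" using T Acar by blast
  define r where "r x = (SOME t. t \<in> T \<and> x \<otimes> inv t \<in> H)" for x
  have r: "r x \<in> T" "x \<otimes> inv (r x) \<in> H" if "x \<in> ?A" for x
  proof -
    have "\<exists>t. t \<in> T \<and> x \<otimes> inv t \<in> H" using cov[OF that] by blast
    then have "r x \<in> T \<and> x \<otimes> inv (r x) \<in> H" unfolding r_def by (rule someI_ex)
    then show "r x \<in> T" "x \<otimes> inv (r x) \<in> H" by auto
  qed
  define Spm where "Spm = S \<union> (\<lambda>x. inv x) ` S"
  have Spm_A: "Spm \<subseteq> ?A" unfolding Spm_def by (auto intro: generate.incl generate.inv)
  have Spm_car: "Spm \<subseteq> carrier G" using Spm_A Acar by blast
  have cardSpm: "card Spm \<le> 2 * card S" unfolding Spm_def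
    using card_Un_le[of S "(\<lambda>x. inv x) ` S"] card_image_le[OF S(1), of "\<lambda>x. inv x"] by simp
  define Y where "Y = (\<lambda>(t,s). t \<otimes> s \<otimes> inv (r (t \<otimes> s))) ` (T \<times> Spm)"
  have finY: "finite Y" unfolding Y_def Spm_def using T S by auto
  have cardY: "card Y \<le> card T * (2 * card S)"
  proof -
    have "card Y \<le> card (T \<times> Spm)" unfolding Y_def by (rule card_image_le) (simp add: Spm_def T S)
    also have "\<dots> = card T * card Spm" by (simp add: card_cartesian_product)
    also have "\<dots> \<le> card T * (2 * card S)" using cardSpm by simp
    finally show ?thesis .
  qed
  have tsA: "t \<otimes> s \<in> ?A" if "t \<in> T" "s \<in> Spm" for t s
    using subgroup.m_closed[OF Asg] that T Spm_A by blast
  have YH: "Y \<subseteq> H" unfolding Y_def using r tsA by auto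
  have Ycar: "Y \<subseteq> carrier G" using YH Hcar by blast
  have gYH: "generate G Y \<subseteq> H" using generate_subgroup_incl[OF YH H(1)] .
  have gYcar: "generate G Y \<subseteq> carrier G" using generate_incl[OF Ycar] .
  have key: "\<forall>t\<in>T. \<exists>k\<in>generate G Y. \<exists>t'\<in>T. t \<otimes> g = k \<otimes> t'" if "g \<in> ?A" for g
    using that
  proof (induction g rule: generate.induct)
    case one
    then show ?case using generate.one[of G Y] Tcar by force
  next
    case (incl s)
    show ?case
    proof
      fix t assume t: "t \<in> T"
      have s: "s \<in> Spm" using incl unfolding Spm_def by blast
      let ?k = "t \<otimes> s \<otimes> inv (r (t \<otimes> s))"
      have kY: "?k \<in> generate G Y" unfolding Y_def using t s by (intro generate.incl) force
      have rt: "r (t \<otimes> s) \<in> T" using r(1)[OF tsA[OF t s]] .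
      have c: "t \<in> carrier G" "s \<in> carrier G" "r (t \<otimes> s) \<in> carrier G"
        using t s Tcar Spm_car rt by blast+
      have "t \<otimes> s = ?k \<otimes> r (t \<otimes> s)"
        using c by (simp add: m_assoc)
      then show "\<exists>k\<in>generate G Y. \<exists>t'\<in>T. t \<otimes> s = k \<otimes> t'" using kY rt by blast
    qed
  next
    case (inv s)
    show ?case
    proof
      fix t assume t: "t \<in> T"
      have s: "inv s \<in> Spm" using inv unfolding Spm_def by blast
      let ?k = "t \<otimes> inv s \<otimes> inv (r (t \<otimes> inv s))"
      have kY: "?k \<in> generate G Y" unfolding Y_def using t s by (intro generate.incl) force
      have rt: "r (t \<otimes> inv s) \<in> T" using r(1)[OF tsA[OF t s]] .
      have c: "t \<in> carrier G" "inv s \<in> carrier G" "r (t \<otimes> inv s) \<in> carrier G"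
        using t s Tcar Spm_car rt by blast+
      have "t \<otimes> inv s = ?k \<otimes> r (t \<otimes> inv s)"
        using c by (simp add: m_assoc)
      then show "\<exists>k\<in>generate G Y. \<exists>t'\<in>T. t \<otimes> inv s = k \<otimes> t'" using kY rt by blast
    qed
  next
    case (eng g1 g2)
    show ?case
    proof
      fix t assume t: "t \<in> T"
      obtain k1 t1 where k1: "k1 \<in> generate G Y" "t1 \<in> T" "t \<otimes> g1 = k1 \<otimes> t1" using eng.IH(1) t by blast
      obtain k2 t2 where k2: "k2 \<in> generate G Y" "t2 \<in> T" "t1 \<otimes> g2 = k2 \<otimes> t2" using eng.IH(2) k1(2) by blast
      have g: "g1 \<in> carrier G" "g2 \<in> carrier G" using eng.hyps Acar by blast+
      have c: "t \<in> carrier G" "t1 \<in> carrier G" "t2 \<in> carrier G" "k1 \<in> carrier G" "k2 \<in> carrier G"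
        using t k1 k2 Tcar gYcar by auto
      have "t \<otimes> (g1 \<otimes> g2) = (t \<otimes> g1) \<otimes> g2" using c g by (simp add: m_assoc)
      also have "\<dots> = k1 \<otimes> (t1 \<otimes> g2)" using k1(3) c g by (simp add: m_assoc)
      also have "\<dots> = (k1 \<otimes> k2) \<otimes> t2" using k2(3) c by (simp add: m_assoc)
      finally show "\<exists>k\<in>generate G Y. \<exists>t'\<in>T. t \<otimes> (g1 \<otimes> g2) = k \<otimes> t'"
        using generate.eng[OF k1(1) k2(1)] k2(2) by blast
    qed
  qed
  have "H \<subseteq> generate G Y"
  proof
    fix h assume h: "h \<in> H"
    then obtain k t' where kt: "k \<in> generate G Y" "t' \<in> T" "\<one> \<otimes> h = k \<otimes> t'" using key[of h] H(2) T(3) by blast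
    have hc: "h \<in> carrier G" using h Hcar by blast
    have kc: "k \<in> carrier G" using kt gYcar by blast
    have tc: "t' \<in> carrier G" using kt Tcar by blast
    have "t' = inv k \<otimes> h" using kt hc kc tc by (simp add: inv_solve_left)
    moreover have "inv k \<otimes> h \<in> H" using kt gYH h subgroup.m_closed[OF H(1)] subgroup.m_inv_closed[OF H(1)] by blast
    ultimately have "t' \<otimes> inv \<one> \<in> H" using tc by simp
    then have "t' = \<one>" using sep kt T(3) by blast
    then show "h \<in> generate G Y" using kt hc kc by simp
  qed
  then show ?thesis using finY YH gYH cardY by blast
qed

end

context group begin

lemma core_count:
  assumes A0: "subgroup A0 G" and B0: "subgroup B0 G"
    and comm: "\<And>a b. a \<in> A0 \<Longrightarrow> b \<in> B0 \<Longrightarrow> a \<otimes> b = b \<otimes> a"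
    and L: "subgroup L G" "finite (rcosets L)"
    and U: "U \<subseteq> A0"
    and Usep: "\<And>u1 u2. u1 \<in> U \<Longrightarrow> u2 \<in> U \<Longrightarrow> u1 \<otimes> inv u2 \<in> L \<Longrightarrow> u1 = u2"
    and V: "V \<subseteq> B0"
    and Vsep: "\<And>v1 v2 c. v1 \<in> V \<Longrightarrow> v2 \<in> V \<Longrightarrow> c \<in> A0 \<Longrightarrow> v1 \<otimes> inv v2 \<otimes> inv c \<in> L \<Longrightarrow> v1 = v2"
  shows "card U * card V \<le> card (rcosets L)"
proof -
  have Ac: "A0 \<subseteq> carrier G" and Bc: "B0 \<subseteq> carrier G" using A0 B0 subgroup.subset by auto
  define T where "T = (\<lambda>(u,v). u \<otimes> v) ` (U \<times> V)"
  have eq: "u1 = u2 \<and> v1 = v2" if a: "u1 \<in> U" "u2 \<in> U" "v1 \<in> V" "v2 \<in> V"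
      "(u1 \<otimes> v1) \<otimes> inv (u2 \<otimes> v2) \<in> L" for u1 u2 v1 v2
  proof -
    have c: "u1 \<in> carrier G" "u2 \<in> carrier G" "v1 \<in> carrier G" "v2 \<in> carrier G"
      using a U V Ac Bc by auto
    let ?x = "u1 \<otimes> inv u2" and ?y = "v1 \<otimes> inv v2"
    have xA: "?x \<in> A0" using a U subgroup.m_closed[OF A0] subgroup.m_inv_closed[OF A0] by blast
    have yB: "?y \<in> B0" using a V subgroup.m_closed[OF B0] subgroup.m_inv_closed[OF B0] by blast
    have iuA: "inv u2 \<in> A0" using a U subgroup.m_inv_closed[OF A0] by blast
    have "(u1 \<otimes> v1) \<otimes> inv (u2 \<otimes> v2) = u1 \<otimes> (?y \<otimes> inv u2)"
      using c by (simp add: inv_mult_group m_assoc)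
    also have "?y \<otimes> inv u2 = inv u2 \<otimes> ?y" using comm[OF iuA yB] by simp
    also have "u1 \<otimes> (inv u2 \<otimes> ?y) = ?x \<otimes> ?y" using c by (simp add: m_assoc)
    also have "?x \<otimes> ?y = ?y \<otimes> ?x" using comm[OF xA yB] .
    finally have yx: "?y \<otimes> ?x \<in> L" using a by simp
    have xc: "?x \<in> carrier G" using c by simp
    have "?y \<otimes> inv (inv ?x) \<in> L" using yx xc by simp
    moreover have "inv ?x \<in> A0" using xA subgroup.m_inv_closed[OF A0] by blast
    ultimately have "v1 = v2" using Vsep a by (simp add: m_assoc)
    then have "?x \<in> L" using yx c by simp
    then have "u1 = u2" using Usep a by blast
    then show ?thesis using \<open>v1 = v2\<close> by blast
  qed
  have Tc: "T \<subseteq> carrier G" unfolding T_def using U V Ac Bc by (auto intro!: m_closed)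
  have "finite T \<and> card T \<le> card (rcosets L)"
  proof (rule card_le_index[OF L(1) L(2) Tc])
    fix t1 t2 assume "t1 \<in> T" "t2 \<in> T" "t1 \<otimes> inv t2 \<in> L"
    then show "t1 = t2" unfolding T_def using eq by auto
  qed
  moreover have inj: "inj_on (\<lambda>(u,v). u \<otimes> v) (U \<times> V)"
  proof (rule inj_onI, clarify)
    fix u1 v1 u2 v2 assume a: "u1 \<in> U" "v1 \<in> V" "u2 \<in> U" "v2 \<in> V" "u1 \<otimes> v1 = u2 \<otimes> v2"
    have "u2 \<otimes> v2 \<in> carrier G" using a U V Ac Bc by (auto intro!: m_closed)
    then have "(u1 \<otimes> v1) \<otimes> inv (u2 \<otimes> v2) \<in> L" using a subgroup.one_closed[OF L(1)] by simp
    then show "u1 = u2 \<and> v1 = v2" using eq a by blast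
  qed
  ultimately have "finite (U \<times> V)" "card (U \<times> V) \<le> card (rcosets L)"
    using finite_imageD card_image unfolding T_def by fastforce+
  then show ?thesis by (metis card_cartesian_product)
qed

end

context group begin

lemma core_gen:
  assumes A0: "subgroup A0 G" and B0: "subgroup B0 G"
    and comm: "\<And>a b. a \<in> A0 \<Longrightarrow> b \<in> B0 \<Longrightarrow> a \<otimes> b = b \<otimes> a"
    and SB: "finite SB" "SB \<subseteq> B0"
    and L: "subgroup L G" "L \<subseteq> generate G (A0 \<union> SB)"
    and U: "U \<subseteq> A0" "\<one> \<in> U"
    and Ucov: "\<And>x. x \<in> A0 \<Longrightarrow> \<exists>u\<in>U. x \<otimes> inv u \<in> L"
    and V: "finite V" "V \<subseteq> B0" "\<one> \<in> V" "V \<subseteq> generate G (A0 \<union> SB)"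
    and Vcov: "\<And>x. x \<in> generate G (A0 \<union> SB) \<Longrightarrow> \<exists>v\<in>V. \<exists>c\<in>A0. x \<otimes> inv v \<otimes> inv c \<in> L"
    and Vsep: "\<And>v1 v2 c. v1 \<in> V \<Longrightarrow> v2 \<in> V \<Longrightarrow> c \<in> A0 \<Longrightarrow> v1 \<otimes> inv v2 \<otimes> inv c \<in> L \<Longrightarrow> v1 = v2"
    and YA: "finite YA" "generate G YA = A0 \<inter> L"
  shows "\<exists>Y. finite Y \<and> Y \<subseteq> L \<and> generate G Y = L \<and> card Y \<le> card YA + card V * (2 * card SB)"
proof -
  let ?E = "generate G (A0 \<union> SB)"
  have Ac: "A0 \<subseteq> carrier G" and Bc: "B0 \<subseteq> carrier G" and Lc: "L \<subseteq> carrier G"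
    using A0 B0 L subgroup.subset by auto
  have SBc: "SB \<subseteq> carrier G" using SB Bc by blast
  have Ec: "?E \<subseteq> carrier G" using generate_incl[of "A0 \<union> SB"] Ac SBc by blast
  have Esg: "subgroup ?E G" using generate_is_subgroup[of "A0 \<union> SB"] Ac SBc by blast
  define SBpm where "SBpm = SB \<union> (\<lambda>x. inv x) ` SB"
  have SBpm_B: "SBpm \<subseteq> B0" unfolding SBpm_def using SB subgroup.m_inv_closed[OF B0] by blast
  have SBpm_E: "SBpm \<subseteq> ?E" unfolding SBpm_def by (auto intro: generate.incl generate.inv)
  have cardSBpm: "card SBpm \<le> 2 * card SB" unfolding SBpm_def
    using card_Un_le[of SB "(\<lambda>x. inv x) ` SB"] card_image_le[OF SB(1), of "\<lambda>x. inv x"] by simp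
  have finSBpm: "finite SBpm" unfolding SBpm_def using SB by auto
  define f where "f vb = (SOME p. fst p \<in> V \<and> snd p \<in> A0 \<and> fst vb \<otimes> snd vb \<otimes> inv (fst p) \<otimes> inv (snd p) \<in> L)" for vb
  have f: "fst (f (v,b)) \<in> V \<and> snd (f (v,b)) \<in> A0 \<and> v \<otimes> b \<otimes> inv (fst (f (v,b))) \<otimes> inv (snd (f (v,b))) \<in> L"
    if "v \<in> V" "b \<in> SBpm" for v b
  proof -
    have "v \<otimes> b \<in> ?E" using that V(4) SBpm_E subgroup.m_closed[OF Esg] by blast
    then obtain v' c where "v' \<in> V" "c \<in> A0" "v \<otimes> b \<otimes> inv v' \<otimes> inv c \<in> L" using Vcov by blast
    then have "\<exists>p. fst p \<in> V \<and> snd p \<in> A0 \<and> fst (v,b) \<otimes> snd (v,b) \<otimes> inv (fst p) \<otimes> inv (snd p) \<in> L"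
      by (intro exI[of _ "(v',c)"]) simp
    from someI_ex[OF this] show ?thesis unfolding f_def by simp
  qed
  define YB where "YB = (\<lambda>(v,b). v \<otimes> b \<otimes> inv (fst (f (v,b))) \<otimes> inv (snd (f (v,b)))) ` (V \<times> SBpm)"
  define Y where "Y = YA \<union> YB"
  have finYB: "finite YB" unfolding YB_def using V finSBpm by auto
  have cardYB: "card YB \<le> card V * (2 * card SB)"
  proof -
    have "card YB \<le> card (V \<times> SBpm)" unfolding YB_def by (rule card_image_le) (simp add: V finSBpm)
    also have "\<dots> = card V * card SBpm" by (simp add: card_cartesian_product)
    also have "\<dots> \<le> card V * (2 * card SB)" using cardSBpm by simp
    finally show ?thesis .
  qed
  have YAL: "YA \<subseteq> A0 \<inter> L" using YA(2) generate.incl[of _ YA G] by blast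
  have YBL: "YB \<subseteq> L" unfolding YB_def using f by auto
  have YL: "Y \<subseteq> L" unfolding Y_def using YAL YBL by blast
  have Yc: "Y \<subseteq> carrier G" using YL Lc by blast
  have gYL: "generate G Y \<subseteq> L" using generate_subgroup_incl[OF YL L(1)] .
  have gYc: "generate G Y \<subseteq> carrier G" using gYL Lc by blast
  have AL_gY: "A0 \<inter> L \<subseteq> generate G Y" using YA(2) mono_generate[of YA Y] unfolding Y_def by blast
  have Uc: "U \<subseteq> carrier G" using U Ac by blast
  have Vc: "V \<subseteq> carrier G" using V Bc by blast
  have stepA: "\<exists>k\<in>generate G Y. \<exists>u'\<in>U. \<exists>v'\<in>V. u \<otimes> v \<otimes> x = k \<otimes> (u' \<otimes> v')"
    if "u \<in> U" "v \<in> V" "x \<in> A0" for u v x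
  proof -
    have c: "u \<in> carrier G" "v \<in> carrier G" "x \<in> carrier G" using that Uc Vc Ac by auto
    have ux: "u \<otimes> x \<in> A0" using that U subgroup.m_closed[OF A0] by blast
    obtain u' where u': "u' \<in> U" "u \<otimes> x \<otimes> inv u' \<in> L" using Ucov[OF ux] by blast
    have u'c: "u' \<in> carrier G" using u' Uc by blast
    have "u \<otimes> x \<otimes> inv u' \<in> A0" using ux u' U subgroup.m_closed[OF A0] subgroup.m_inv_closed[OF A0] by blast
    then have k: "u \<otimes> x \<otimes> inv u' \<in> generate G Y" using u' AL_gY by blast
    have "u \<otimes> v \<otimes> x = u \<otimes> (x \<otimes> v)" using comm[OF that(3)] that V c by (simp add: m_assoc subsetD)
    also have "\<dots> = (u \<otimes> x \<otimes> inv u') \<otimes> (u' \<otimes> v)" using c u'c by (simp add: m_assoc)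
    finally show ?thesis using k u' that by blast
  qed
  have stepB: "\<exists>k\<in>generate G Y. \<exists>u'\<in>U. \<exists>v'\<in>V. u \<otimes> v \<otimes> b = k \<otimes> (u' \<otimes> v')"
    if "u \<in> U" "v \<in> V" "b \<in> SBpm" for u v b
  proof -
    define v' where "v' = fst (f (v,b))"
    define c where "c = snd (f (v,b))"
    have fv: "v' \<in> V" "c \<in> A0" "v \<otimes> b \<otimes> inv v' \<otimes> inv c \<in> L" using f[OF that(2,3)] unfolding v'_def c_def by auto
    have k1: "v \<otimes> b \<otimes> inv v' \<otimes> inv c \<in> generate G Y"
      unfolding Y_def YB_def v'_def c_def using that by (intro generate.incl) force
    have cu: "c \<otimes> u \<in> A0" using fv that U subgroup.m_closed[OF A0] by blast
    obtain u'' where u'': "u'' \<in> U" "c \<otimes> u \<otimes> inv u'' \<in> L" using Ucov[OF cu] by blast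
    have "c \<otimes> u \<otimes> inv u'' \<in> A0" using cu u'' U subgroup.m_closed[OF A0] subgroup.m_inv_closed[OF A0] by blast
    then have k2: "c \<otimes> u \<otimes> inv u'' \<in> generate G Y" using u'' AL_gY by blast
    have c0: "u \<in> carrier G" "v \<in> carrier G" "b \<in> carrier G" "v' \<in> carrier G" "c \<in> carrier G" "u'' \<in> carrier G"
      using that fv u'' Uc Vc Ac SBpm_B Bc by auto
    have uA: "u \<in> A0" using that U by blast
    have vB: "v \<in> B0" "inv v' \<in> B0" "b \<in> B0" using that fv V SBpm_B subgroup.m_inv_closed[OF B0] by blast+
    have "(v \<otimes> b \<otimes> inv v' \<otimes> inv c) \<otimes> (c \<otimes> u \<otimes> inv u'') \<otimes> (u'' \<otimes> v') = v \<otimes> b \<otimes> (inv v' \<otimes> u) \<otimes> v'"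
      using c0 by (simp add: m_assoc)
    also have "inv v' \<otimes> u = u \<otimes> inv v'" using comm[OF uA vB(2)] by simp
    also have "v \<otimes> b \<otimes> (u \<otimes> inv v') \<otimes> v' = v \<otimes> (b \<otimes> u)" using c0 by (simp add: m_assoc)
    also have "b \<otimes> u = u \<otimes> b" using comm[OF uA vB(3)] by simp
    also have "v \<otimes> (u \<otimes> b) = (v \<otimes> u) \<otimes> b" using c0 by (simp add: m_assoc)
    also have "v \<otimes> u = u \<otimes> v" using comm[OF uA vB(1)] by simp
    finally have "u \<otimes> v \<otimes> b = (v \<otimes> b \<otimes> inv v' \<otimes> inv c) \<otimes> (c \<otimes> u \<otimes> inv u'') \<otimes> (u'' \<otimes> v')" by simp
    then show ?thesis using generate.eng[OF k1 k2] u'' fv by blast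
  qed
  have key: "\<forall>u\<in>U. \<forall>v\<in>V. \<exists>k\<in>generate G Y. \<exists>u'\<in>U. \<exists>v'\<in>V. u \<otimes> v \<otimes> g = k \<otimes> (u' \<otimes> v')"
    if "g \<in> ?E" for g
    using that
  proof (induction g rule: generate.induct)
    case one
    show ?case
    proof (intro ballI)
      fix u v assume "u \<in> U" "v \<in> V"
      then have "u \<otimes> v \<otimes> \<one> = \<one> \<otimes> (u \<otimes> v)" using Uc Vc by (metis m_closed r_one l_one subsetD)
      then show "\<exists>k\<in>generate G Y. \<exists>u'\<in>U. \<exists>v'\<in>V. u \<otimes> v \<otimes> \<one> = k \<otimes> (u' \<otimes> v')"
        using generate.one \<open>u \<in> U\<close> \<open>v \<in> V\<close> by blast
    qed
  next
    case (incl h)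
    then show ?case
    proof
      assume "h \<in> A0" then show ?thesis using stepA by blast
    next
      assume "h \<in> SB" then have "h \<in> SBpm" unfolding SBpm_def by blast
      then show ?thesis using stepB by blast
    qed
  next
    case (inv h)
    then show ?case
    proof
      assume "h \<in> A0" then have "inv h \<in> A0" using subgroup.m_inv_closed[OF A0] by blast
      then show ?thesis using stepA by blast
    next
      assume "h \<in> SB" then have "inv h \<in> SBpm" unfolding SBpm_def by blast
      then show ?thesis using stepB by blast
    qed
  next
    case (eng g1 g2)
    show ?case
    proof (intro ballI)
      fix u v assume uv: "u \<in> U" "v \<in> V"
      obtain k1 u1 v1 where k1: "k1 \<in> generate G Y" "u1 \<in> U" "v1 \<in> V" "u \<otimes> v \<otimes> g1 = k1 \<otimes> (u1 \<otimes> v1)"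
        using eng.IH(1) uv by blast
      obtain k2 u2 v2 where k2: "k2 \<in> generate G Y" "u2 \<in> U" "v2 \<in> V" "u1 \<otimes> v1 \<otimes> g2 = k2 \<otimes> (u2 \<otimes> v2)"
        using eng.IH(2) k1(2,3) by blast
      have g: "g1 \<in> carrier G" "g2 \<in> carrier G" using eng.hyps Ec by blast+
      have c: "u \<in> carrier G" "v \<in> carrier G" "u1 \<in> carrier G" "v1 \<in> carrier G" "u2 \<in> carrier G" "v2 \<in> carrier G"
        "k1 \<in> carrier G" "k2 \<in> carrier G"
        using uv k1 k2 Uc Vc gYc by auto
      have "u \<otimes> v \<otimes> (g1 \<otimes> g2) = (u \<otimes> v \<otimes> g1) \<otimes> g2" using c g by (simp add: m_assoc)
      also have "\<dots> = k1 \<otimes> (u1 \<otimes> v1 \<otimes> g2)" using k1(4) c g by (simp add: m_assoc)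
      also have "\<dots> = (k1 \<otimes> k2) \<otimes> (u2 \<otimes> v2)" using k2(4) c by (simp add: m_assoc)
      finally show "\<exists>k\<in>generate G Y. \<exists>u'\<in>U. \<exists>v'\<in>V. u \<otimes> v \<otimes> (g1 \<otimes> g2) = k \<otimes> (u' \<otimes> v')"
        using generate.eng[OF k1(1) k2(1)] k2(2,3) by blast
    qed
  qed
  have "L \<subseteq> generate G Y"
  proof
    fix h assume h: "h \<in> L"
    obtain k u' v' where kuv: "k \<in> generate G Y" "u' \<in> U" "v' \<in> V" "\<one> \<otimes> \<one> \<otimes> h = k \<otimes> (u' \<otimes> v')"
      using key[of h] h L(2) U(2) V(3) by blast
    have c: "h \<in> carrier G" "k \<in> carrier G" "u' \<in> carrier G" "v' \<in> carrier G"
      using h kuv Lc gYc Uc Vc by auto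
    have "u' \<otimes> v' = inv k \<otimes> h" using kuv(4) c by (simp add: inv_solve_left m_closed)
    moreover have "inv k \<otimes> h \<in> L" using kuv gYL h subgroup.m_closed[OF L(1)] subgroup.m_inv_closed[OF L(1)] by blast
    ultimately have uvL: "u' \<otimes> v' \<in> L" by simp
    have u'A: "u' \<in> A0" "v' \<in> B0" using kuv U V by blast+
    have "v' \<otimes> inv \<one> \<otimes> inv (inv u') = u' \<otimes> v'" using comm[OF u'A] c by simp
    moreover have "inv u' \<in> A0" using u'A subgroup.m_inv_closed[OF A0] by blast
    ultimately have "v' = \<one>" using Vsep[of v' \<one> "inv u'"] uvL kuv V(3) by auto
    then have "u' \<in> A0 \<inter> L" using uvL u'A c by simp
    then have "u' \<in> generate G Y" using AL_gY by blast
    then have "k \<otimes> (u' \<otimes> v') \<in> generate G Y" using \<open>v' = \<one>\<close> c generate.eng[OF kuv(1)] by simp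
    then show "h \<in> generate G Y" using kuv(4) c by simp
  qed
  then have "generate G Y = L" using gYL by blast
  moreover have "finite Y" unfolding Y_def using YA finYB by blast
  moreover have "card Y \<le> card YA + card V * (2 * card SB)"
    unfolding Y_def using card_Un_le[of YA YB] cardYB by linarith
  ultimately show ?thesis using YL by blast
qed

end

context group begin

lemma fin_index_carrier: "finite (rcosets (carrier G))"
  by (rule fin_index_cover[of _ "{\<one>}"]) (auto simp: subgroup_self)

lemma normal_fi_inter:
  assumes "N1 \<lhd> G" "finite (rcosets N1)" "N2 \<lhd> G" "finite (rcosets N2)"
  shows "N1 \<inter> N2 \<lhd> G \<and> finite (rcosets (N1 \<inter> N2))"
  using normal_subgroup_intersect[OF assms(1,3)] fin_index_inter[OF normal_imp_subgroup[OF assms(1)] assms(2)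
      normal_imp_subgroup[OF assms(3)] assms(4)] by blast

lemma rf_avoid:
  assumes rf: "residually_finite G" and Xs: "finite Xs" "Xs \<subseteq> carrier G" "\<one> \<notin> Xs"
  shows "\<exists>N. N \<lhd> G \<and> finite (rcosets N) \<and> Xs \<inter> N = {}"
  using Xs
proof (induction Xs rule: finite_induct)
  case empty
  then show ?case using normal_self fin_index_carrier by blast
next
  case (insert x Xs)
  have h: "Xs \<subseteq> carrier G" "\<one> \<notin> Xs" "x \<in> carrier G" "x \<noteq> \<one>" using insert.prems by auto
  obtain N where N: "N \<lhd> G" "finite (rcosets N)" "Xs \<inter> N = {}" using insert.IH[OF h(1,2)] by blast
  from rf have "\<forall>g\<in>carrier G. g \<noteq> \<one> \<longrightarrow> (\<exists>N. N \<lhd> G \<and> finite (rcosets N) \<and> g \<notin> N)"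
    unfolding residually_finite_def .
  then obtain M where M: "M \<lhd> G" "finite (rcosets M)" "x \<notin> M" using h(3,4) by blast
  have "N \<inter> M \<lhd> G \<and> finite (rcosets (N \<inter> M))" using normal_fi_inter[OF N(1,2) M(1,2)] .
  moreover have "insert x Xs \<inter> (N \<inter> M) = {}" using N(3) M(3) by blast
  ultimately show ?case by blast
qed

lemma rf_trivial:
  assumes rf: "residually_finite G" and x: "x \<in> carrier G"
    and all: "\<And>N. N \<lhd> G \<Longrightarrow> finite (rcosets N) \<Longrightarrow> x \<in> N"
  shows "x = \<one>"
proof (rule ccontr)
  assume "x \<noteq> \<one>"
  from rf have "\<forall>g\<in>carrier G. g \<noteq> \<one> \<longrightarrow> (\<exists>N. N \<lhd> G \<and> finite (rcosets N) \<and> g \<notin> N)"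
    unfolding residually_finite_def .
  then obtain M where M: "M \<lhd> G" "finite (rcosets M)" "x \<notin> M" using x \<open>x \<noteq> \<one>\<close> by blast
  then show False using all by blast
qed

lemma pow_diff_nat:
  assumes "z \<in> carrier G" "j \<le> (i::nat)"
  shows "z [^] i \<otimes> inv (z [^] j) = z [^] (i - j)"
proof -
  have "z [^] i = z [^] (i - j) \<otimes> z [^] j" using nat_pow_mult[OF assms(1), of "i - j" j] assms(2) by simp
  then show ?thesis using assms(1) by (simp add: m_assoc)
qed

lemma pow_inj_inf:
  assumes z: "z \<in> carrier G" "\<forall>n::nat. 0 < n \<longrightarrow> z [^] n \<noteq> \<one>"
  shows "inj (\<lambda>i::nat. z [^] i)"
proof (rule injI)
  fix i j :: nat assume e: "z [^] i = z [^] j"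
  show "i = j"
  proof (rule ccontr)
    assume "i \<noteq> j"
    then consider "i < j" | "j < i" by linarith
    then show False
    proof cases
      case 1
      have "z [^] j \<otimes> inv (z [^] i) = \<one>" using e z by simp
      then have "z [^] (j - i) = \<one>" using pow_diff_nat[OF z(1), of i j] 1 by simp
      then show False using z 1 by simp
    next
      case 2
      have "z [^] i \<otimes> inv (z [^] j) = \<one>" using e z by simp
      then have "z [^] (i - j) = \<one>" using pow_diff_nat[OF z(1), of j i] 2 by simp
      then show False using z 2 by simp
    qed
  qed
qed

end

context group begin

lemma exists_pow_in:
  assumes z: "z \<in> carrier G" "\<forall>n::nat. 0 < n \<longrightarrow> z [^] n \<noteq> \<one>"
    and L: "subgroup L G" "finite (rcosets L)"
  shows "\<exists>n::nat. 0 < n \<and> z [^] n \<in> L"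
proof (rule ccontr)
  assume no: "\<not> ?thesis"
  define M where "M = card (rcosets L)"
  define T where "T = (\<lambda>i::nat. z [^] i) ` {..M}"
  have Tc: "T \<subseteq> carrier G" unfolding T_def using z by auto
  have "finite T \<and> card T \<le> card (rcosets L)"
  proof (rule card_le_index[OF L Tc])
    fix t1 t2 assume t: "t1 \<in> T" "t2 \<in> T" "t1 \<otimes> inv t2 \<in> L"
    then obtain i j :: nat where ij: "t1 = z [^] i" "t2 = z [^] j" unfolding T_def by blast
    show "t1 = t2"
    proof (cases "j \<le> i")
      case True
      then have "z [^] (i - j) \<in> L" using pow_diff_nat[OF z(1) True] t ij by simp
      then have "\<not> 0 < i - j" using no by meson
      then show ?thesis using ij True by (metis diff_is_0_eq le_antisym not_gr_zero)
    next
      case False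
      have "inv (t1 \<otimes> inv t2) \<in> L" using t subgroup.m_inv_closed[OF L(1)] by blast
      moreover have "inv (t1 \<otimes> inv t2) = z [^] j \<otimes> inv (z [^] i)" using ij z by (simp add: inv_mult_group)
      ultimately have "z [^] (j - i) \<in> L" using pow_diff_nat[OF z(1), of i j] False by simp
      then have "\<not> 0 < j - i" using no by meson
      then show ?thesis using False by simp
    qed
  qed
  moreover have "card T = Suc M" unfolding T_def
    using card_image[OF inj_on_subset[OF pow_inj_inf[OF z] subset_UNIV]] by simp
  ultimately show False unfolding M_def by simp
qed

lemma int_pow_mod:
  assumes z: "z \<in> carrier G" and r: "0 < r"
  shows "z [^] (k::int) = (z [^] (int r)) [^] (k div int r) \<otimes> z [^] (k mod int r)"
proof -
  have e: "int r * (k div int r) + k mod int r = k" by (metis mult.commute div_mult_mod_eq)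
  have "z [^] k = z [^] (int r * (k div int r)) \<otimes> z [^] (k mod int r)"
    using int_pow_mult[OF z, of "int r * (k div int r)" "k mod int r"] e by simp
  then show ?thesis using int_pow_pow[OF z] by simp
qed

lemma cyclic_part:
  assumes z: "z \<in> carrier G" "\<forall>n::nat. 0 < n \<longrightarrow> z [^] n \<noteq> \<one>"
    and L: "subgroup L G" "finite (rcosets L)"
    and avoid: "\<forall>j::nat. 0 < j \<and> j \<le> R \<longrightarrow> z [^] j \<notin> L"
  shows "\<exists>U YA. finite U \<and> U \<subseteq> generate G {z} \<and> \<one> \<in> U \<and> R < card U \<and>
     (\<forall>x\<in>generate G {z}. \<exists>u\<in>U. x \<otimes> inv u \<in> L) \<and> (\<forall>u1\<in>U. \<forall>u2\<in>U. u1 \<otimes> inv u2 \<in> L \<longrightarrow> u1 = u2) \<and>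
     finite YA \<and> card YA \<le> 1 \<and> generate G YA = generate G {z} \<inter> L"
proof -
  define r where "r = (LEAST n::nat. 0 < n \<and> z [^] n \<in> L)"
  have ex: "\<exists>n::nat. 0 < n \<and> z [^] n \<in> L" using exists_pow_in[OF z L] .
  have r: "0 < r" "z [^] r \<in> L" using LeastI_ex[OF ex] unfolding r_def by auto
  have rmin: "\<And>n. 0 < n \<Longrightarrow> n < r \<Longrightarrow> z [^] n \<notin> L" using not_less_Least unfolding r_def by blast
  have rR: "R < r" using avoid r by (meson not_le)
  have zr: "z [^] (int r) \<in> L" using r(2) by (simp add: int_pow_int)
  have zrc: "z [^] (int r) \<in> carrier G" using z by simp
  have mem: "z [^] k \<in> L \<longleftrightarrow> int r dvd k" for k :: int
  proof
    assume kL: "z [^] k \<in> L"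
    let ?q = "(z [^] (int r)) [^] (k div int r)"
    have qL: "?q \<in> L" using subgroup_int_pow_closed[OF L(1) zr] .
    have qc: "?q \<in> carrier G" using zrc by simp
    have "z [^] (k mod int r) = inv ?q \<otimes> z [^] k" using int_pow_mod[OF z(1) r(1), of k] qc z by simp
    then have mL: "z [^] (k mod int r) \<in> L"
      using kL qL subgroup.m_closed[OF L(1)] subgroup.m_inv_closed[OF L(1)] by simp
    have pm: "0 \<le> k mod int r" using r by (intro pos_mod_sign) simp
    have "k mod int r = int (nat (k mod int r))" using pm by simp
    then have "z [^] (nat (k mod int r)) \<in> L" using mL by (metis int_pow_int)
    moreover have "nat (k mod int r) < r" using r by (simp add: nat_less_iff)
    ultimately have "nat (k mod int r) = 0" using rmin by blast
    then show "int r dvd k" using pm by (simp add: dvd_eq_mod_eq_0)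
  next
    assume "int r dvd k"
    then obtain m where "k = int r * m" by blast
    then have "z [^] k = (z [^] (int r)) [^] m" using int_pow_pow[OF z(1)] by simp
    then show "z [^] k \<in> L" using subgroup_int_pow_closed[OF L(1) zr] by simp
  qed
  define U where "U = (\<lambda>i::nat. z [^] i) ` {..<r}"
  have genz: "generate G {z} = {z [^] (k::int) | k. k \<in> UNIV}" using generate_pow[OF z(1)] .
  have Ugen: "U \<subseteq> generate G {z}" unfolding U_def genz by (auto simp: int_pow_int[symmetric])
  have one: "\<one> \<in> U" unfolding U_def using r by force
  have cardU: "card U = r" unfolding U_def
    using card_image[OF inj_on_subset[OF pow_inj_inf[OF z] subset_UNIV]] by simp
  have cov: "\<forall>x\<in>generate G {z}. \<exists>u\<in>U. x \<otimes> inv u \<in> L"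
  proof
    fix x assume "x \<in> generate G {z}"
    then obtain k where k: "x = z [^] (k::int)" unfolding genz by blast
    let ?u = "z [^] (nat (k mod int r))"
    have pm: "0 \<le> k mod int r" using r by (intro pos_mod_sign) simp
    have "nat (k mod int r) < r" using r by (simp add: nat_less_iff)
    then have "nat (k mod int r) \<in> {..<r}" by simp
    then have uU: "?u \<in> U" unfolding U_def by (rule imageI)
    have "?u = z [^] (k mod int r)" using pm int_pow_int[of G z "nat (k mod int r)"] by simp
    then have e: "x \<otimes> inv ?u = z [^] (k - k mod int r)" using k int_pow_diff[OF z(1)] by simp
    have "int r dvd (k - k mod int r)" by (simp add: minus_mod_eq_mult_div)
    then have "z [^] (k - k mod int r) \<in> L" using mem by blast
    then have "x \<otimes> inv ?u \<in> L" using e by simp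
    then show "\<exists>u\<in>U. x \<otimes> inv u \<in> L" using uU by blast
  qed
  have sep: "\<forall>u1\<in>U. \<forall>u2\<in>U. u1 \<otimes> inv u2 \<in> L \<longrightarrow> u1 = u2"
  proof (intro ballI impI)
    fix u1 u2 assume u: "u1 \<in> U" "u2 \<in> U" "u1 \<otimes> inv u2 \<in> L"
    then obtain i j where ij: "i < r" "j < r" "u1 = z [^] i" "u2 = z [^] j" unfolding U_def by blast
    have "u1 \<otimes> inv u2 = z [^] (int i - int j)" using ij int_pow_diff[OF z(1)] by (simp add: int_pow_int)
    then have "int r dvd (int i - int j)" using u mem by simp
    then have "i = j"
    proof -
      assume d: "int r dvd (int i - int j)"
      show "i = j"
      proof (rule ccontr)
        assume "i \<noteq> j"
        then consider "j < i" | "i < j" by linarith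
        then show False
        proof cases
          case 1
          then have "0 < int i - int j" "int i - int j < int r" using ij by auto
          then show False using zdvd_not_zless d by blast
        next
          case 2
          have d2: "int r dvd (int j - int i)" using d by (metis dvd_minus_iff minus_diff_eq)
          have "0 < int j - int i" "int j - int i < int r" using ij 2 by auto
          then show False using zdvd_not_zless d2 by blast
        qed
      qed
    qed
    then show "u1 = u2" using ij by simp
  qed
  define YA where "YA = {z [^] (int r)}"
  have gYA: "generate G YA = generate G {z} \<inter> L"
  proof
    show "generate G YA \<subseteq> generate G {z} \<inter> L"
      unfolding YA_def generate_pow[OF zrc] genz using int_pow_pow[OF z(1)] mem by auto
  next
    show "generate G {z} \<inter> L \<subseteq> generate G YA"
    proof
      fix x assume x: "x \<in> generate G {z} \<inter> L"
      then obtain k where k: "x = z [^] (k::int)" unfolding genz by blast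
      then have "int r dvd k" using x mem by blast
      then obtain m where "k = int r * m" by blast
      then have "x = (z [^] (int r)) [^] m" using k int_pow_pow[OF z(1)] by simp
      then show "x \<in> generate G YA" unfolding YA_def generate_pow[OF zrc] by blast
    qed
  qed
  have finU: "finite U" unfolding U_def by simp
  have cYA: "finite YA" "card YA \<le> 1" unfolding YA_def by auto
  show ?thesis
    apply (rule exI[of _ U], rule exI[of _ YA])
    using finU Ugen one cardU rR cov sep gYA cYA by simp
qed

end

context group begin

lemma centralizer_subgroup:
  assumes D: "subgroup D G"
  shows "subgroup {x \<in> D. \<forall>d\<in>D. x \<otimes> d = d \<otimes> x} G"
proof -
  have Dc: "D \<subseteq> carrier G" using D subgroup.subset by blast
  show ?thesis
  proof (rule subgroupI)
    show "{x \<in> D. \<forall>d\<in>D. x \<otimes> d = d \<otimes> x} \<subseteq> carrier G" using Dc by blast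
    show "{x \<in> D. \<forall>d\<in>D. x \<otimes> d = d \<otimes> x} \<noteq> {}" using subgroup.one_closed[OF D] subgroup.mem_carrier[OF D] by auto
  next
    fix a assume a: "a \<in> {x \<in> D. \<forall>d\<in>D. x \<otimes> d = d \<otimes> x}"
    have ac: "a \<in> carrier G" using a Dc by blast
    have "inv a \<in> D" using a subgroup.m_inv_closed[OF D] by blast
    moreover have "\<forall>d\<in>D. inv a \<otimes> d = d \<otimes> inv a"
    proof
      fix d assume d: "d \<in> D"
      have dc: "d \<in> carrier G" using d Dc by blast
      have "a \<otimes> d = d \<otimes> a" using a d by blast
      then have "inv a \<otimes> (a \<otimes> d) \<otimes> inv a = inv a \<otimes> (d \<otimes> a) \<otimes> inv a" by simp
      then show "inv a \<otimes> d = d \<otimes> inv a" using ac dc by (simp add: m_assoc)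
    qed
    ultimately show "inv a \<in> {x \<in> D. \<forall>d\<in>D. x \<otimes> d = d \<otimes> x}" by blast
  next
    fix a b assume a: "a \<in> {x \<in> D. \<forall>d\<in>D. x \<otimes> d = d \<otimes> x}" and b: "b \<in> {x \<in> D. \<forall>d\<in>D. x \<otimes> d = d \<otimes> x}"
    have c: "a \<in> carrier G" "b \<in> carrier G" using a b Dc by blast+
    have "a \<otimes> b \<in> D" using a b subgroup.m_closed[OF D] by blast
    moreover have "\<forall>d\<in>D. a \<otimes> b \<otimes> d = d \<otimes> (a \<otimes> b)"
    proof
      fix d assume d: "d \<in> D"
      have dc: "d \<in> carrier G" using d Dc by blast
      have "a \<otimes> b \<otimes> d = a \<otimes> (d \<otimes> b)" using b d c dc by (simp add: m_assoc)
      also have "\<dots> = (a \<otimes> d) \<otimes> b" using c dc by (simp add: m_assoc)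
      also have "\<dots> = d \<otimes> (a \<otimes> b)" using a d c dc by (simp add: m_assoc)
      finally show "a \<otimes> b \<otimes> d = d \<otimes> (a \<otimes> b)" .
    qed
    ultimately show "a \<otimes> b \<in> {x \<in> D. \<forall>d\<in>D. x \<otimes> d = d \<otimes> x}" by blast
  qed
qed

lemma pow_mod_nat:
  assumes s: "s \<in> carrier G" "s [^] (n::nat) = \<one>" "0 < n"
  shows "s [^] (i::nat) = s [^] (i mod n)"
proof -
  have "s [^] i = s [^] (n * (i div n) + i mod n)" by simp
  also have "\<dots> = (s [^] n) [^] (i div n) \<otimes> s [^] (i mod n)" using s nat_pow_mult nat_pow_pow by metis
  finally show ?thesis using s by simp
qed

lemma torsion_finite:
  assumes sg: "subgroup Z G" and comm: "\<And>x y. x \<in> Z \<Longrightarrow> y \<in> Z \<Longrightarrow> x \<otimes> y = y \<otimes> x"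
    and tor: "\<And>x. x \<in> Z \<Longrightarrow> \<exists>n::nat. 0 < n \<and> x [^] n = \<one>"
    and F: "finite F" "F \<subseteq> Z"
  shows "finite (generate G F)"
  using F
proof (induction F rule: finite_induct)
  case empty
  then show ?case using generate_empty by simp
next
  case (insert s F)
  have Zc: "Z \<subseteq> carrier G" using sg subgroup.subset by blast
  have sZ: "s \<in> Z" and FZ: "F \<subseteq> Z" using insert.prems by auto
  have sc: "s \<in> carrier G" using sZ Zc by blast
  have Fc: "F \<subseteq> carrier G" using FZ Zc by blast
  have gF: "generate G F \<subseteq> Z" using generate_subgroup_incl[OF FZ sg] .
  have gFc: "generate G F \<subseteq> carrier G" using gF Zc by blast
  obtain n :: nat where n: "0 < n" "s [^] n = \<one>" using tor[OF sZ] by blast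
  have fin: "finite (generate G F)" using insert.IH FZ by blast
  have commp: "y \<otimes> s [^] (j::nat) = s [^] j \<otimes> y" if "y \<in> generate G F" for y j
  proof -
    have "s \<otimes> y = y \<otimes> s" using comm[OF sZ] that gF by blast
    then show ?thesis using group_commutes_pow[of s y j] sc that gFc by auto
  qed
  have claim: "\<exists>i::nat. \<exists>y\<in>generate G F. g = s [^] i \<otimes> y" if "g \<in> generate G (insert s F)" for g
    using that
  proof (induction g rule: generate.induct)
    case one
    then show ?case using generate.one[of G F] by (intro exI[of _ 0]) force
  next
    case (incl h)
    then show ?case
    proof
      assume "h = s"
      then show ?thesis using generate.one[of G F] sc by (intro exI[of _ 1]) force
    next
      assume h: "h \<in> F"
      then have "h \<in> carrier G" using Fc by blast
      then show ?thesis using generate.incl[OF h] by (intro exI[of _ 0]) force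
    qed
  next
    case (inv h)
    then show ?case
    proof
      assume hs: "h = s"
      have "s [^] (n - 1) \<otimes> s = \<one>" using n sc nat_pow_Suc[of s "n - 1"] by (simp add: Suc_pred)
      then have "inv s = s [^] (n - 1)" using sc by (simp add: inv_equality)
      then show ?thesis using hs generate.one[of G F] sc by (intro exI[of _ "n - 1"]) force
    next
      assume h: "h \<in> F"
      then have "inv h \<in> carrier G" using Fc by blast
      then show ?thesis using generate.inv[OF h] by (intro exI[of _ 0]) force
    qed
  next
    case (eng g1 g2)
    obtain i :: nat and y where iy: "y \<in> generate G F" "g1 = s [^] i \<otimes> y" using eng.IH(1) by blast
    obtain j :: nat and y' where jy: "y' \<in> generate G F" "g2 = s [^] j \<otimes> y'" using eng.IH(2) by blast
    have c: "y \<in> carrier G" "y' \<in> carrier G" using iy jy gFc by blast+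
    have "g1 \<otimes> g2 = s [^] i \<otimes> (y \<otimes> s [^] j) \<otimes> y'" using iy jy c sc by (simp add: m_assoc)
    also have "\<dots> = s [^] i \<otimes> (s [^] j \<otimes> y) \<otimes> y'" using commp[OF iy(1)] by simp
    also have "\<dots> = s [^] (i + j) \<otimes> (y \<otimes> y')" using c sc by (simp add: m_assoc nat_pow_mult[symmetric])
    finally show ?case using generate.eng[OF iy(1) jy(1)] by blast
  qed
  have "generate G (insert s F) \<subseteq> (\<lambda>(i,y). s [^] i \<otimes> y) ` ({..<n} \<times> generate G F)"
  proof
    fix g assume "g \<in> generate G (insert s F)"
    then obtain i y where iy: "y \<in> generate G F" "g = s [^] (i::nat) \<otimes> y" using claim by blast
    have "g = s [^] (i mod n) \<otimes> y" using iy pow_mod_nat[OF sc n(2,1)] by simp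
    moreover have "i mod n \<in> {..<n}" using n by simp
    ultimately show "g \<in> (\<lambda>(i,y). s [^] i \<otimes> y) ` ({..<n} \<times> generate G F)" using iy by (intro image_eqI[where x = "(i mod n, y)"]) auto
  qed
  then show ?case using fin finite_subset by blast
qed

end

context group begin

lemma U_exists:
  assumes L: "subgroup L G" "finite (rcosets L)" and W: "W \<subseteq> carrier G"
    and T0: "T0 \<subseteq> W" "finite T0" "\<forall>t1\<in>T0. \<forall>t2\<in>T0. t1 \<otimes> inv t2 \<in> L \<longrightarrow> t1 = t2"
  shows "\<exists>U. T0 \<subseteq> U \<and> U \<subseteq> W \<and> finite U \<and> (\<forall>t1\<in>U. \<forall>t2\<in>U. t1 \<otimes> inv t2 \<in> L \<longrightarrow> t1 = t2)
            \<and> (\<forall>w\<in>W. \<exists>t\<in>U. w \<otimes> inv t \<in> L)"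
proof (rule max_sep[where rel = "\<lambda>x y. x \<otimes> inv y \<in> L" and M = "card (rcosets L)", OF T0])
  fix T assume T: "T \<subseteq> W" "finite T" "\<forall>t1\<in>T. \<forall>t2\<in>T. t1 \<otimes> inv t2 \<in> L \<longrightarrow> t1 = t2"
  show "card T \<le> card (rcosets L)" using card_le_index[OF L, of T] T W by blast
next
  fix x y assume xy: "x \<in> W" "y \<in> W" "x \<otimes> inv y \<in> L"
  have "x \<in> carrier G" "y \<in> carrier G" using xy W by blast+
  then have "inv (x \<otimes> inv y) = y \<otimes> inv x" by (simp add: inv_mult_group)
  then show "y \<otimes> inv x \<in> L" using xy subgroup.m_inv_closed[OF L(1)] by metis
next
  fix x assume "x \<in> W"
  then have "x \<in> carrier G" using W by blast
  then show "x \<otimes> inv x \<in> L" using subgroup.one_closed[OF L(1)] by simp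
qed

lemma V_exists:
  assumes L: "subgroup L G" "finite (rcosets L)" and W: "W \<subseteq> carrier G"
    and A0: "subgroup A0 G" and conj: "\<And>c l. c \<in> A0 \<Longrightarrow> l \<in> L \<Longrightarrow> c \<otimes> l \<otimes> inv c \<in> L"
    and T0: "T0 \<subseteq> W" "finite T0" "\<forall>t1\<in>T0. \<forall>t2\<in>T0. \<forall>c\<in>A0. t1 \<otimes> inv t2 \<otimes> inv c \<in> L \<longrightarrow> t1 = t2"
  shows "\<exists>V. T0 \<subseteq> V \<and> V \<subseteq> W \<and> finite V \<and> (\<forall>t1\<in>V. \<forall>t2\<in>V. \<forall>c\<in>A0. t1 \<otimes> inv t2 \<otimes> inv c \<in> L \<longrightarrow> t1 = t2)
            \<and> (\<forall>w\<in>W. \<exists>t\<in>V. \<exists>c\<in>A0. w \<otimes> inv t \<otimes> inv c \<in> L)"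
proof -
  have Ac: "A0 \<subseteq> carrier G" using A0 subgroup.subset by blast
  have "\<exists>V. T0 \<subseteq> V \<and> V \<subseteq> W \<and> finite V \<and> (\<forall>t1\<in>V. \<forall>t2\<in>V. (\<exists>c\<in>A0. t1 \<otimes> inv t2 \<otimes> inv c \<in> L) \<longrightarrow> t1 = t2)
            \<and> (\<forall>w\<in>W. \<exists>t\<in>V. \<exists>c\<in>A0. w \<otimes> inv t \<otimes> inv c \<in> L)"
  proof (rule max_sep[where rel = "\<lambda>x y. \<exists>c\<in>A0. x \<otimes> inv y \<otimes> inv c \<in> L" and M = "card (rcosets L)"])
    show "\<forall>t1\<in>T0. \<forall>t2\<in>T0. (\<exists>c\<in>A0. t1 \<otimes> inv t2 \<otimes> inv c \<in> L) \<longrightarrow> t1 = t2" using T0 by blast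
  next
    fix T assume T: "T \<subseteq> W" "finite T" "\<forall>t1\<in>T. \<forall>t2\<in>T. (\<exists>c\<in>A0. t1 \<otimes> inv t2 \<otimes> inv c \<in> L) \<longrightarrow> t1 = t2"
    have "\<forall>t1\<in>T. \<forall>t2\<in>T. t1 \<otimes> inv t2 \<in> L \<longrightarrow> t1 = t2"
    proof (intro ballI impI)
      fix t1 t2 assume t: "t1 \<in> T" "t2 \<in> T" "t1 \<otimes> inv t2 \<in> L"
      have "t1 \<in> carrier G" "t2 \<in> carrier G" using t T W by blast+
      then have "t1 \<otimes> inv t2 \<otimes> inv \<one> \<in> L" using t by simp
      then show "t1 = t2" using T t subgroup.one_closed[OF A0] by blast
    qed
    then show "card T \<le> card (rcosets L)" using card_le_index[OF L, of T] T W by blast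
  next
    fix x y assume xy: "x \<in> W" "y \<in> W" "\<exists>c\<in>A0. x \<otimes> inv y \<otimes> inv c \<in> L"
    then obtain c where c: "c \<in> A0" "x \<otimes> inv y \<otimes> inv c \<in> L" by blast
    have cc: "c \<in> carrier G" "x \<in> carrier G" "y \<in> carrier G" using c xy W Ac by auto
    have "inv (x \<otimes> inv y \<otimes> inv c) \<in> L" using c subgroup.m_inv_closed[OF L(1)] by blast
    moreover have "inv c \<in> A0" using c subgroup.m_inv_closed[OF A0] by blast
    ultimately have "inv c \<otimes> inv (x \<otimes> inv y \<otimes> inv c) \<otimes> inv (inv c) \<in> L" using conj by blast
    moreover have "inv c \<otimes> inv (x \<otimes> inv y \<otimes> inv c) \<otimes> inv (inv c) = y \<otimes> inv x \<otimes> inv (inv c)"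
      using cc by (simp add: inv_mult_group m_assoc)
    ultimately show "\<exists>c\<in>A0. y \<otimes> inv x \<otimes> inv c \<in> L" using \<open>inv c \<in> A0\<close> by auto
  next
    fix x assume "x \<in> W"
    then have "x \<in> carrier G" using W by blast
    then show "\<exists>c\<in>A0. x \<otimes> inv x \<otimes> inv c \<in> L" using subgroup.one_closed[OF L(1)] subgroup.one_closed[OF A0]
      by (intro bexI[of _ \<one>]) auto
  qed (use T0 in auto)
  then show ?thesis by blast
qed

end

context group begin

lemma central_finish:
  assumes D: "subgroup D G" "finite (rcosets D)"
    and SD: "finite SD" "SD \<subseteq> D" "generate G SD = D"
    and A0: "subgroup A0 G" "A0 \<subseteq> D" "\<And>a d. a \<in> A0 \<Longrightarrow> d \<in> D \<Longrightarrow> a \<otimes> d = d \<otimes> a"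
    and N: "N \<lhd> G" "finite (rcosets N)"
    and U: "finite U" "U \<subseteq> A0" "\<one> \<in> U" "R < card U"
    and Ucov: "\<forall>x\<in>A0. \<exists>u\<in>U. x \<otimes> inv u \<in> N \<inter> D"
    and Usep: "\<forall>u1\<in>U. \<forall>u2\<in>U. u1 \<otimes> inv u2 \<in> N \<inter> D \<longrightarrow> u1 = u2"
    and YA: "finite YA" "card YA \<le> 1" "generate G YA = A0 \<inter> (N \<inter> D)"
    and eps: "real (1 + 2 * card SD) \<le> \<epsilon> * real R"
  shows "\<exists>L Y. subgroup L G \<and> finite (rcosets L) \<and> finite Y \<and> Y \<subseteq> L \<and> generate G Y = L
           \<and> real (card Y) < \<epsilon> * real (card (rcosets L))"
proof -
  define L where "L = N \<inter> D"
  have Nsg: "subgroup N G" using normal_imp_subgroup[OF N(1)] .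
  have Lsg: "subgroup L G" unfolding L_def using subgroups_Inter_pair[OF Nsg D(1)] .
  have Lfi: "finite (rcosets L)" unfolding L_def using fin_index_inter[OF Nsg N(2) D] .
  have Dc: "D \<subseteq> carrier G" using D subgroup.subset by blast
  have conj: "c \<otimes> l \<otimes> inv c \<in> L" if "c \<in> A0" "l \<in> L" for c l
  proof -
    have cD: "c \<in> D" and lD: "l \<in> D" and lN: "l \<in> N" using that A0 unfolding L_def by auto
    have "c \<otimes> l \<otimes> inv c \<in> N" using normal_invE(2)[OF N(1)] cD lN Dc by blast
    moreover have "c \<otimes> l \<otimes> inv c \<in> D" using cD lD subgroup.m_closed[OF D(1)] subgroup.m_inv_closed[OF D(1)] by blast
    ultimately show ?thesis unfolding L_def by blast
  qed
  have T0: "{\<one>} \<subseteq> D" "finite {\<one>}" "\<forall>t1\<in>{\<one>}. \<forall>t2\<in>{\<one>}. \<forall>c\<in>A0. t1 \<otimes> inv t2 \<otimes> inv c \<in> L \<longrightarrow> t1 = t2"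
    using subgroup.one_closed[OF D(1)] by auto
  obtain V where V: "{\<one>} \<subseteq> V" "V \<subseteq> D" "finite V"
      "\<forall>t1\<in>V. \<forall>t2\<in>V. \<forall>c\<in>A0. t1 \<otimes> inv t2 \<otimes> inv c \<in> L \<longrightarrow> t1 = t2"
      "\<forall>w\<in>D. \<exists>t\<in>V. \<exists>c\<in>A0. w \<otimes> inv t \<otimes> inv c \<in> L"
    using V_exists[OF Lsg Lfi Dc A0(1) conj T0] by blast
  have E: "generate G (A0 \<union> SD) = D"
  proof
    show "generate G (A0 \<union> SD) \<subseteq> D" using generate_subgroup_incl[OF _ D(1)] A0(2) SD(2) by blast
    show "D \<subseteq> generate G (A0 \<union> SD)" using mono_generate[of SD "A0 \<union> SD"] SD(3) by blast
  qed
  obtain Y where Y: "finite Y" "Y \<subseteq> L" "generate G Y = L" "card Y \<le> card YA + card V * (2 * card SD)"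
  proof -
    have "\<exists>Y. finite Y \<and> Y \<subseteq> L \<and> generate G Y = L \<and> card Y \<le> card YA + card V * (2 * card SD)"
    proof (rule core_gen[OF A0(1) D(1) A0(3) SD(1,2) Lsg _ U(2,3) _ V(3) V(2) _ _ _ _ YA(1)])
      show "L \<subseteq> generate G (A0 \<union> SD)" using E unfolding L_def by blast
      show "\<And>x. x \<in> A0 \<Longrightarrow> \<exists>u\<in>U. x \<otimes> inv u \<in> L" using Ucov unfolding L_def by blast
      show "\<one> \<in> V" using V by blast
      show "V \<subseteq> generate G (A0 \<union> SD)" using E V by blast
      show "\<And>x. x \<in> generate G (A0 \<union> SD) \<Longrightarrow> \<exists>v\<in>V. \<exists>c\<in>A0. x \<otimes> inv v \<otimes> inv c \<in> L" using E V by blast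
      show "\<And>v1 v2 c. v1 \<in> V \<Longrightarrow> v2 \<in> V \<Longrightarrow> c \<in> A0 \<Longrightarrow> v1 \<otimes> inv v2 \<otimes> inv c \<in> L \<Longrightarrow> v1 = v2" using V by blast
      show "generate G YA = A0 \<inter> L" using YA unfolding L_def by blast
    qed
    then show ?thesis using that by blast
  qed
  have cnt: "card U * card V \<le> card (rcosets L)"
  proof (rule core_count[OF A0(1) D(1) A0(3) Lsg Lfi U(2) _ V(2)])
    show "\<And>u1 u2. u1 \<in> U \<Longrightarrow> u2 \<in> U \<Longrightarrow> u1 \<otimes> inv u2 \<in> L \<Longrightarrow> u1 = u2" using Usep unfolding L_def by blast
    show "\<And>v1 v2 c. v1 \<in> V \<Longrightarrow> v2 \<in> V \<Longrightarrow> c \<in> A0 \<Longrightarrow> v1 \<otimes> inv v2 \<otimes> inv c \<in> L \<Longrightarrow> v1 = v2" using V by blast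
  qed
  have "V \<noteq> {}" using V(1) by blast
  then have cV: "1 \<le> card V" using V(3) by (simp add: Suc_leI card_gt_0_iff)
  have "real (card Y) \<le> real (card YA + card V * (2 * card SD))" using Y(4) by linarith
  also have "\<dots> \<le> real (card V) * real (1 + 2 * card SD)" using YA(2) cV by (simp add: algebra_simps)
  also have "\<dots> \<le> real (card V) * (\<epsilon> * real R)" using eps by (intro mult_left_mono) auto
  also have "\<dots> < real (card V) * (\<epsilon> * real (card U))"
  proof -
    have "0 < \<epsilon>"
    proof (rule ccontr)
      assume "\<not> 0 < \<epsilon>"
      then have "\<epsilon> * real R \<le> 0" by (simp add: mult_nonpos_nonneg)
      then show False using eps by linarith
    qed
    then show ?thesis using U(4) cV by (intro mult_strict_left_mono) auto
  qed
  also have "\<dots> = \<epsilon> * real (card U * card V)" by simp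
  also have "\<dots> \<le> \<epsilon> * real (card (rcosets L))"
  proof -
    have "0 \<le> \<epsilon>"
    proof (rule ccontr)
      assume "\<not> 0 \<le> \<epsilon>"
      then have "\<epsilon> * real R \<le> 0" by (simp add: mult_nonpos_nonneg)
      then show False using eps by linarith
    qed
    then show ?thesis using cnt by (intro mult_left_mono) (simp_all add: of_nat_mult[symmetric] del: of_nat_mult)
  qed
  finally show ?thesis using Lsg Lfi Y by blast
qed

end

context group begin

lemma central_case:
  assumes rf: "residually_finite G"
    and D: "subgroup D G" "finite (rcosets D)"
    and SD: "finite SD" "SD \<subseteq> D" "generate G SD = D"
    and Zinf: "infinite {x \<in> D. \<forall>d\<in>D. x \<otimes> d = d \<otimes> x}"
    and eps: "0 < \<epsilon>"
  shows "\<exists>L Y. subgroup L G \<and> finite (rcosets L) \<and> finite Y \<and> Y \<subseteq> L \<and> generate G Y = L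
           \<and> real (card Y) < \<epsilon> * real (card (rcosets L))"
proof -
  define Zc where "Zc = {x \<in> D. \<forall>d\<in>D. x \<otimes> d = d \<otimes> x}"
  have Zsg: "subgroup Zc G" unfolding Zc_def using centralizer_subgroup[OF D(1)] .
  have Dc: "D \<subseteq> carrier G" using D subgroup.subset by blast
  have Zc: "Zc \<subseteq> carrier G" using Zsg subgroup.subset by blast
  define R where "R = nat \<lceil>real (1 + 2 * card SD) / \<epsilon>\<rceil>"
  have eR: "real (1 + 2 * card SD) \<le> \<epsilon> * real R"
  proof -
    have "real (1 + 2 * card SD) / \<epsilon> \<le> real R" unfolding R_def by linarith
    then show ?thesis using eps by (simp add: field_simps)
  qed
  have A0props: "subgroup A0 G \<and> A0 \<subseteq> D \<and> (\<forall>a\<in>A0. \<forall>d\<in>D. a \<otimes> d = d \<otimes> a)" if "A0 \<subseteq> Zc" "subgroup A0 G" for A0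
    using that unfolding Zc_def by blast
  show ?thesis
  proof (cases "\<exists>z\<in>Zc. \<forall>n::nat. 0 < n \<longrightarrow> z [^] n \<noteq> \<one>")
    case True
    then obtain z where z: "z \<in> Zc" "\<forall>n::nat. 0 < n \<longrightarrow> z [^] n \<noteq> \<one>" by blast
    have zc: "z \<in> carrier G" using z Zc by blast
    define Xs where "Xs = (\<lambda>j::nat. z [^] j) ` {1..R}"
    have Xs1: "finite Xs" "Xs \<subseteq> carrier G" unfolding Xs_def using zc by auto
    have Xs2: "\<one> \<notin> Xs"
    proof
      assume "\<one> \<in> Xs"
      then obtain j :: nat where j: "j \<in> {1..R}" "z [^] j = \<one>" unfolding Xs_def by auto
      then have "0 < j" by simp
      then show False using z(2) j(2) by blast
    qed
    have Xs: "finite Xs" "Xs \<subseteq> carrier G" "\<one> \<notin> Xs" using Xs1 Xs2 by auto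
    obtain N where N: "N \<lhd> G" "finite (rcosets N)" "Xs \<inter> N = {}" using rf_avoid[OF rf Xs] by blast
    have Nsg: "subgroup N G" using normal_imp_subgroup[OF N(1)] .
    have Lsg: "subgroup (N \<inter> D) G" using subgroups_Inter_pair[OF Nsg D(1)] .
    have Lfi: "finite (rcosets (N \<inter> D))" using fin_index_inter[OF Nsg N(2) D] .
    have avoid: "\<forall>j::nat. 0 < j \<and> j \<le> R \<longrightarrow> z [^] j \<notin> N \<inter> D"
    proof (intro allI impI)
      fix j :: nat assume "0 < j \<and> j \<le> R"
      then have "z [^] j \<in> Xs" unfolding Xs_def by auto
      then show "z [^] j \<notin> N \<inter> D" using N(3) by blast
    qed
    obtain U YA where UY: "finite U" "U \<subseteq> generate G {z}" "\<one> \<in> U" "R < card U"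
      "\<forall>x\<in>generate G {z}. \<exists>u\<in>U. x \<otimes> inv u \<in> N \<inter> D" "\<forall>u1\<in>U. \<forall>u2\<in>U. u1 \<otimes> inv u2 \<in> N \<inter> D \<longrightarrow> u1 = u2"
      "finite YA" "card YA \<le> 1" "generate G YA = generate G {z} \<inter> (N \<inter> D)"
      using cyclic_part[OF zc z(2) Lsg Lfi avoid] by blast
    have gz: "subgroup (generate G {z}) G" using generate_is_subgroup zc by blast
    have gzZ: "generate G {z} \<subseteq> Zc" using generate_subgroup_incl[OF _ Zsg] z by blast
    have P: "subgroup (generate G {z}) G" "generate G {z} \<subseteq> D"
      "\<And>a d. a \<in> generate G {z} \<Longrightarrow> d \<in> D \<Longrightarrow> a \<otimes> d = d \<otimes> a"
      using A0props[OF gzZ gz] by blast+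
    show ?thesis using central_finish[OF D SD P N(1,2) UY eR] .
  next
    case False
    then have tor: "\<And>x. x \<in> Zc \<Longrightarrow> \<exists>n::nat. 0 < n \<and> x [^] n = \<one>" by blast
    have "infinite Zc" using Zinf unfolding Zc_def .
    then obtain F where F: "F \<subseteq> Zc" "finite F" "card F = Suc R" using infinite_arbitrarily_large by blast
    have commZ: "\<And>x y. x \<in> Zc \<Longrightarrow> y \<in> Zc \<Longrightarrow> x \<otimes> y = y \<otimes> x" unfolding Zc_def by blast
    define A0 where "A0 = generate G F"
    have Fc: "F \<subseteq> carrier G" using F Zc by blast
    have A0fin: "finite A0" unfolding A0_def using torsion_finite[OF Zsg commZ tor F(2,1)] .
    have A0sg: "subgroup A0 G" unfolding A0_def using generate_is_subgroup[OF Fc] .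
    have A0Z: "A0 \<subseteq> Zc" unfolding A0_def using generate_subgroup_incl[OF F(1) Zsg] .
    have A0c: "A0 \<subseteq> carrier G" using A0Z Zc by blast
    have FA: "F \<subseteq> A0" unfolding A0_def using generate.incl[of _ F G] by blast
    define Xs where "Xs = A0 - {\<one>}"
    have Xs: "finite Xs" "Xs \<subseteq> carrier G" "\<one> \<notin> Xs" unfolding Xs_def using A0fin A0c by auto
    obtain N where N: "N \<lhd> G" "finite (rcosets N)" "Xs \<inter> N = {}" using rf_avoid[OF rf Xs] by blast
    have AL: "A0 \<inter> (N \<inter> D) = {\<one>}"
    proof
      show "A0 \<inter> (N \<inter> D) \<subseteq> {\<one>}" using N(3) unfolding Xs_def by blast
      show "{\<one>} \<subseteq> A0 \<inter> (N \<inter> D)"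
        using subgroup.one_closed[OF A0sg] subgroup.one_closed[OF normal_imp_subgroup[OF N(1)]]
          subgroup.one_closed[OF D(1)] by blast
    qed
    have U: "finite A0" "A0 \<subseteq> A0" "\<one> \<in> A0" "R < card A0"
    proof -
      have "card F \<le> card A0" using card_mono[OF A0fin FA] .
      then show "R < card A0" using F by simp
    qed (use A0fin subgroup.one_closed[OF A0sg] in auto)
    have Ucov: "\<forall>x\<in>A0. \<exists>u\<in>A0. x \<otimes> inv u \<in> N \<inter> D"
    proof
      fix x assume "x \<in> A0"
      then have "x \<otimes> inv x = \<one>" using A0c by auto
      then show "\<exists>u\<in>A0. x \<otimes> inv u \<in> N \<inter> D" using AL \<open>x \<in> A0\<close> by (intro bexI[of _ x]) auto
    qed
    have Usep: "\<forall>u1\<in>A0. \<forall>u2\<in>A0. u1 \<otimes> inv u2 \<in> N \<inter> D \<longrightarrow> u1 = u2"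
    proof (intro ballI impI)
      fix u1 u2 assume u: "u1 \<in> A0" "u2 \<in> A0" "u1 \<otimes> inv u2 \<in> N \<inter> D"
      have "u1 \<otimes> inv u2 \<in> A0" using u subgroup.m_closed[OF A0sg] subgroup.m_inv_closed[OF A0sg] by blast
      then have "u1 \<otimes> inv u2 = \<one>" using AL u by blast
      then show "u1 = u2" using u A0c by (metis inv_equality inv_inv r_inv subsetD inv_closed)
    qed
    have YA: "finite {}" "card {} \<le> (1::nat)" "generate G {} = A0 \<inter> (N \<inter> D)" using AL generate_empty by auto
    have P: "subgroup A0 G" "A0 \<subseteq> D" "\<And>a d. a \<in> A0 \<Longrightarrow> d \<in> D \<Longrightarrow> a \<otimes> d = d \<otimes> a"
      using A0props[OF A0Z A0sg] by blast+
    show ?thesis using central_finish[OF D SD P N(1,2) U Ucov Usep YA eR] .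
  qed
qed

end

context group begin

lemma rel_sym:
  assumes L: "subgroup L G" and A0: "subgroup A0 G"
    and conj: "\<And>c l. c \<in> A0 \<Longrightarrow> l \<in> L \<Longrightarrow> c \<otimes> l \<otimes> inv c \<in> L"
    and xy: "x \<in> carrier G" "y \<in> carrier G" and c: "c \<in> A0" "x \<otimes> inv y \<otimes> inv c \<in> L"
  shows "\<exists>c'\<in>A0. y \<otimes> inv x \<otimes> inv c' \<in> L"
proof -
  have cc: "c \<in> carrier G" using c A0 subgroup.subset by blast
  have "inv (x \<otimes> inv y \<otimes> inv c) \<in> L" using c subgroup.m_inv_closed[OF L] by blast
  moreover have ic: "inv c \<in> A0" using c subgroup.m_inv_closed[OF A0] by blast
  ultimately have "inv c \<otimes> inv (x \<otimes> inv y \<otimes> inv c) \<otimes> inv (inv c) \<in> L" using conj by blast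
  moreover have "inv c \<otimes> inv (x \<otimes> inv y \<otimes> inv c) \<otimes> inv (inv c) = y \<otimes> inv x \<otimes> inv (inv c)"
    using cc xy by (simp add: inv_mult_group m_assoc)
  ultimately show ?thesis using ic by auto
qed

lemma comm_mod:
  assumes L: "subgroup L G" and conjD: "\<And>g l. g \<in> D \<Longrightarrow> l \<in> L \<Longrightarrow> g \<otimes> l \<otimes> inv g \<in> L"
    and c: "b \<in> carrier G" "c \<in> carrier G" "a2 \<in> carrier G" "b2 \<in> carrier G" "l \<in> carrier G"
    and l: "l \<in> L" "b = l \<otimes> c" and cb: "c \<otimes> b2 = b2 \<otimes> c" and ba: "b \<otimes> a2 = a2 \<otimes> b"
    and D: "a2 \<in> D" "b2 \<in> D"
  shows "b \<otimes> (a2 \<otimes> b2) \<otimes> inv b \<otimes> inv (a2 \<otimes> b2) \<in> L"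
proof -
  define k where "k = l \<otimes> (b2 \<otimes> inv l \<otimes> inv b2)"
  have kL: "k \<in> L" unfolding k_def
    using conjD[OF D(2) subgroup.m_inv_closed[OF L l(1)]] l(1) subgroup.m_closed[OF L] c by (simp add: m_assoc)
  have e1: "l \<otimes> c \<otimes> b2 = l \<otimes> b2 \<otimes> c" using cb c by (simp add: m_assoc)
  have "b \<otimes> b2 \<otimes> inv b \<otimes> inv b2 = (l \<otimes> c \<otimes> b2) \<otimes> inv c \<otimes> inv l \<otimes> inv b2"
    using l(2) c by (simp add: m_assoc inv_mult_group)
  also have "\<dots> = (l \<otimes> b2 \<otimes> c) \<otimes> inv c \<otimes> inv l \<otimes> inv b2" using e1 by simp
  also have "\<dots> = k" unfolding k_def using c by (simp add: m_assoc)
  finally have e2: "b \<otimes> b2 \<otimes> inv b \<otimes> inv b2 = k" .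
  have "b \<otimes> (a2 \<otimes> b2) \<otimes> inv b \<otimes> inv (a2 \<otimes> b2) = (b \<otimes> a2) \<otimes> b2 \<otimes> inv b \<otimes> inv b2 \<otimes> inv a2"
    using c by (simp add: m_assoc inv_mult_group)
  also have "\<dots> = (a2 \<otimes> b) \<otimes> b2 \<otimes> inv b \<otimes> inv b2 \<otimes> inv a2" using ba by simp
  also have "\<dots> = a2 \<otimes> (b \<otimes> b2 \<otimes> inv b \<otimes> inv b2) \<otimes> inv a2" using c by (simp add: m_assoc)
  also have "\<dots> = a2 \<otimes> k \<otimes> inv a2" using e2 by simp
  finally show ?thesis using conjD[OF D(1) kL] by simp
qed

end

context group begin

lemma notQ_contra:
  assumes rf: "residually_finite G" and D: "subgroup D G"
    and A0: "subgroup A0 G" "A0 \<subseteq> D" and B0: "subgroup B0 G" "B0 \<subseteq> D"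
    and comm: "\<And>a b. a \<in> A0 \<Longrightarrow> b \<in> B0 \<Longrightarrow> a \<otimes> b = b \<otimes> a"
    and dec: "\<And>d. d \<in> D \<Longrightarrow> \<exists>a\<in>A0. \<exists>b\<in>B0. d = a \<otimes> b"
    and Binf: "infinite B0" and Zfin: "finite {x \<in> D. \<forall>d\<in>D. x \<otimes> d = d \<otimes> x}"
    and bound: "\<And>N V. N \<lhd> G \<Longrightarrow> finite (rcosets N) \<Longrightarrow> V \<subseteq> B0 \<Longrightarrow> finite V \<Longrightarrow> \<one> \<in> V \<Longrightarrow>
        (\<forall>v1\<in>V. \<forall>v2\<in>V. \<forall>c\<in>A0. v1 \<otimes> inv v2 \<otimes> inv c \<in> N \<inter> D \<longrightarrow> v1 = v2) \<Longrightarrow> card V < R0"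
  shows False
proof -
  have Dc: "D \<subseteq> carrier G" using D subgroup.subset by blast
  have Ac: "A0 \<subseteq> carrier G" and Bc: "B0 \<subseteq> carrier G" using A0 B0 Dc by auto
  define P where "P N V \<longleftrightarrow> N \<lhd> G \<and> finite (rcosets N) \<and> V \<subseteq> B0 \<and> finite V \<and> \<one> \<in> V \<and>
        (\<forall>v1\<in>V. \<forall>v2\<in>V. \<forall>c\<in>A0. v1 \<otimes> inv v2 \<otimes> inv c \<in> N \<inter> D \<longrightarrow> v1 = v2)" for N V
  define S where "S = {card V | N V. P N V}"
  have "S \<subseteq> {..<R0}"
  proof
    fix k assume "k \<in> S"
    then obtain N V where NV: "k = card V" "P N V" unfolding S_def by blast
    then have "card V < R0" unfolding P_def using bound by blast
    then show "k \<in> {..<R0}" using NV by simp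
  qed
  then have finS: "finite S" using finite_subset by blast
  have "P (carrier G) {\<one>}" unfolding P_def using normal_self fin_index_carrier subgroup.one_closed[OF B0(1)] by auto
  then have "card {\<one>} \<in> S" unfolding S_def by blast
  then have SNE: "S \<noteq> {}" by blast
  define m where "m = Max S"
  have "m \<in> S" unfolding m_def using finS SNE by (rule Max_in)
  then obtain N0 V0 where NV0: "P N0 V0" "card V0 = m" unfolding S_def by blast
  have mx: "card V \<le> m" if "P N V" for N V
  proof -
    have "card V \<in> S" unfolding S_def using that by blast
    then show ?thesis unfolding m_def using finS by (rule Max_ge[rotated])
  qed
  have N0: "N0 \<lhd> G" "finite (rcosets N0)" using NV0 unfolding P_def by auto
  have V0: "V0 \<subseteq> B0" "finite V0" "\<one> \<in> V0"
      "\<forall>v1\<in>V0. \<forall>v2\<in>V0. \<forall>c\<in>A0. v1 \<otimes> inv v2 \<otimes> inv c \<in> N0 \<inter> D \<longrightarrow> v1 = v2"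
    using NV0 unfolding P_def by auto
  have N0c: "N0 \<subseteq> carrier G" using normal_imp_subgroup[OF N0(1)] subgroup.subset by blast
  have cov: "\<exists>v\<in>V0. \<exists>c\<in>A0. x \<otimes> inv v \<otimes> inv c \<in> (N \<inter> N0) \<inter> D"
    if N: "N \<lhd> G" "finite (rcosets N)" and x: "x \<in> B0" for N x
  proof (rule ccontr)
    assume nc: "\<not> ?thesis"
    define N' where "N' = N \<inter> N0"
    have N': "N' \<lhd> G" "finite (rcosets N')" unfolding N'_def using normal_fi_inter[OF N N0] by blast+
    have N'sg: "subgroup N' G" using normal_imp_subgroup[OF N'(1)] .
    have L'sg: "subgroup (N' \<inter> D) G" using subgroups_Inter_pair[OF N'sg D] .
    have conj: "c \<otimes> l \<otimes> inv c \<in> N' \<inter> D" if "c \<in> A0" "l \<in> N' \<inter> D" for c l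
    proof -
      have cD: "c \<in> D" "c \<in> carrier G" using that A0 Dc by auto
      have lN: "l \<in> N'" "l \<in> D" using that by auto
      have "c \<otimes> l \<otimes> inv c \<in> N'" using normal_invE(2)[OF N'(1) cD(2) lN(1)] .
      moreover have "c \<otimes> l \<otimes> inv c \<in> D" using cD lN subgroup.m_closed[OF D] subgroup.m_inv_closed[OF D] by blast
      ultimately show ?thesis by blast
    qed
    have xc: "x \<in> carrier G" using x Bc by blast
    have xV: "x \<notin> V0"
    proof
      assume "x \<in> V0"
      have "x \<otimes> inv x \<otimes> inv \<one> \<in> N' \<inter> D" using xc subgroup.one_closed[OF L'sg] by simp
      then show False using nc \<open>x \<in> V0\<close> subgroup.one_closed[OF A0(1)] unfolding N'_def by blast
    qed
    have "P N' (insert x V0)"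
      unfolding P_def
    proof (intro conjI)
      show "\<forall>v1\<in>insert x V0. \<forall>v2\<in>insert x V0. \<forall>c\<in>A0. v1 \<otimes> inv v2 \<otimes> inv c \<in> N' \<inter> D \<longrightarrow> v1 = v2"
      proof (intro ballI impI)
        fix v1 v2 c assume a: "v1 \<in> insert x V0" "v2 \<in> insert x V0" "c \<in> A0" "v1 \<otimes> inv v2 \<otimes> inv c \<in> N' \<inter> D"
        show "v1 = v2"
        proof (cases "v1 = x")
          case True
          show ?thesis
          proof (rule ccontr)
            assume "v1 \<noteq> v2"
            then have "v2 \<in> V0" using a True by auto
            then show False using nc a True unfolding N'_def by blast
          qed
        next
          case False
          then have v1: "v1 \<in> V0" using a by auto
          show ?thesis
          proof (cases "v2 = x")
            case True
            have "v1 \<in> carrier G" using v1 V0 Bc by blast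
            then obtain c' where "c' \<in> A0" "x \<otimes> inv v1 \<otimes> inv c' \<in> N' \<inter> D"
              using rel_sym[OF L'sg A0(1) conj _ xc a(3)] a(4) True by blast
            then show ?thesis using nc v1 unfolding N'_def by blast
          next
            case False
            then have v2: "v2 \<in> V0" using a by auto
            have "N' \<inter> D \<subseteq> N0 \<inter> D" unfolding N'_def by blast
            then show ?thesis using V0(4) v1 v2 a by blast
          qed
        qed
      qed
    qed (use N' V0 x in auto)
    then have "card (insert x V0) \<le> m" by (rule mx)
    moreover have "card (insert x V0) = Suc m" using xV V0 NV0 by simp
    ultimately show False by simp
  qed
  define B0' where "B0' = {b \<in> B0. \<exists>c\<in>A0. b \<otimes> inv c \<in> N0 \<inter> D}"
  have "B0 \<subseteq> (\<lambda>(y,v). y \<otimes> v) ` (B0' \<times> V0)"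
  proof
    fix x assume x: "x \<in> B0"
    obtain v c where vc: "v \<in> V0" "c \<in> A0" "x \<otimes> inv v \<otimes> inv c \<in> (carrier G \<inter> N0) \<inter> D"
      using cov[OF normal_self fin_index_carrier x] by blast
    have y: "x \<otimes> inv v \<in> B0" using x vc V0 subgroup.m_closed[OF B0(1)] subgroup.m_inv_closed[OF B0(1)] by blast
    then have "x \<otimes> inv v \<in> B0'" unfolding B0'_def using vc by blast
    moreover have "x = (x \<otimes> inv v) \<otimes> v" using x vc V0 Bc by (simp add: m_assoc subsetD)
    ultimately show "x \<in> (\<lambda>(y,v). y \<otimes> v) ` (B0' \<times> V0)" using vc by force
  qed
  then have B0'inf: "infinite B0'" using Binf V0(2) finite_subset by blast
  have "B0' \<subseteq> {x \<in> D. \<forall>d\<in>D. x \<otimes> d = d \<otimes> x}"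
  proof
    fix b assume b: "b \<in> B0'"
    then obtain c0 where c0: "b \<in> B0" "c0 \<in> A0" "b \<otimes> inv c0 \<in> N0 \<inter> D" unfolding B0'_def by blast
    have bc: "b \<in> carrier G" "c0 \<in> carrier G" using c0 Bc Ac by auto
    have "\<forall>d\<in>D. b \<otimes> d = d \<otimes> b"
    proof
      fix d assume d: "d \<in> D"
      have dc: "d \<in> carrier G" using d Dc by blast
      have "b \<otimes> d \<otimes> inv b \<otimes> inv d = \<one>"
      proof (rule rf_trivial[OF rf])
        show "b \<otimes> d \<otimes> inv b \<otimes> inv d \<in> carrier G" using bc dc by simp
      next
        fix N assume N: "N \<lhd> G" "finite (rcosets N)"
        define N' where "N' = N \<inter> N0"
        have N': "N' \<lhd> G" "finite (rcosets N')" unfolding N'_def using normal_fi_inter[OF N N0] by blast+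
        have N'sg: "subgroup N' G" using normal_imp_subgroup[OF N'(1)] .
        have L'sg: "subgroup (N' \<inter> D) G" using subgroups_Inter_pair[OF N'sg D] .
        have conjD: "g \<otimes> l \<otimes> inv g \<in> N' \<inter> D" if "g \<in> D" "l \<in> N' \<inter> D" for g l
        proof -
          have gc: "g \<in> carrier G" using that Dc by auto
          have lN: "l \<in> N'" "l \<in> D" using that by auto
          have "g \<otimes> l \<otimes> inv g \<in> N'" using normal_invE(2)[OF N'(1) gc lN(1)] .
          moreover have "g \<otimes> l \<otimes> inv g \<in> D" using that lN subgroup.m_closed[OF D] subgroup.m_inv_closed[OF D] by blast
          ultimately show ?thesis by blast
        qed
        obtain v c where vc: "v \<in> V0" "c \<in> A0" "b \<otimes> inv v \<otimes> inv c \<in> N' \<inter> D"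
          using cov[OF N c0(1)] unfolding N'_def by blast
        have vcc: "v \<in> carrier G" "c \<in> carrier G" using vc V0 Bc Ac by auto
        have N0sg: "subgroup N0 G" using normal_imp_subgroup[OF N0(1)] .
        have L0sg: "subgroup (N0 \<inter> D) G" using subgroups_Inter_pair[OF N0sg D] .
        have conj0: "g \<otimes> l \<otimes> inv g \<in> N0 \<inter> D" if "g \<in> D" "l \<in> N0 \<inter> D" for g l
        proof -
          have gc: "g \<in> carrier G" using that Dc by auto
          have lN: "l \<in> N0" "l \<in> D" using that by auto
          have "g \<otimes> l \<otimes> inv g \<in> N0" using normal_invE(2)[OF N0(1) gc lN(1)] .
          moreover have "g \<otimes> l \<otimes> inv g \<in> D" using that lN subgroup.m_closed[OF D] subgroup.m_inv_closed[OF D] by blast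
          ultimately show ?thesis by blast
        qed
        have q0: "b \<otimes> inv v \<otimes> inv c \<in> N0 \<inter> D" using vc unfolding N'_def by blast
        have "inv (b \<otimes> inv c0) \<otimes> (b \<otimes> inv v \<otimes> inv c) \<in> N0 \<inter> D"
          using c0(3) q0 subgroup.m_closed[OF L0sg] subgroup.m_inv_closed[OF L0sg] by blast
        moreover have "inv (b \<otimes> inv c0) \<otimes> (b \<otimes> inv v \<otimes> inv c) = c0 \<otimes> inv v \<otimes> inv c"
          using bc vcc by (simp add: inv_mult_group m_assoc)
        ultimately have "c0 \<otimes> inv v \<otimes> inv c \<in> N0 \<inter> D" by simp
        moreover have ic0: "inv c0 \<in> D" using c0 A0 subgroup.m_inv_closed[OF D] by blast
        ultimately have "inv c0 \<otimes> (c0 \<otimes> inv v \<otimes> inv c) \<otimes> inv (inv c0) \<in> N0 \<inter> D" using conj0 by blast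
        moreover have "inv c0 \<otimes> (c0 \<otimes> inv v \<otimes> inv c) \<otimes> inv (inv c0) = \<one> \<otimes> inv v \<otimes> inv (inv c0 \<otimes> c)"
          using bc vcc by (simp add: inv_mult_group m_assoc)
        ultimately have X: "\<one> \<otimes> inv v \<otimes> inv (inv c0 \<otimes> c) \<in> N0 \<inter> D" by simp
        have "inv c0 \<otimes> c \<in> A0" using c0 vc subgroup.m_closed[OF A0(1)] subgroup.m_inv_closed[OF A0(1)] by blast
        then have "\<one> = v" using V0(4) V0(3) vc(1) X by blast
        then have "v = \<one>" by simp
        then have lL: "b \<otimes> inv c \<in> N' \<inter> D" using vc bc by simp
        obtain a2 b2 where ab: "a2 \<in> A0" "b2 \<in> B0" "d = a2 \<otimes> b2" using dec[OF d] by blast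
        have abc: "a2 \<in> carrier G" "b2 \<in> carrier G" using ab Ac Bc by auto
        have "b \<otimes> (a2 \<otimes> b2) \<otimes> inv b \<otimes> inv (a2 \<otimes> b2) \<in> N' \<inter> D"
        proof (rule comm_mod[OF L'sg conjD])
          show "b = (b \<otimes> inv c) \<otimes> c" using bc vcc by (simp add: m_assoc)
          show "c \<otimes> b2 = b2 \<otimes> c" using comm vc ab by blast
          show "b \<otimes> a2 = a2 \<otimes> b" using comm c0 ab by metis
          show "a2 \<in> D" "b2 \<in> D" using ab A0 B0 by auto
        qed (use bc vcc abc lL in auto)
        then show "b \<otimes> d \<otimes> inv b \<otimes> inv d \<in> N" using ab unfolding N'_def by blast
      qed
      moreover have "b \<otimes> d = (b \<otimes> d \<otimes> inv b \<otimes> inv d) \<otimes> (d \<otimes> b)" using bc dc by (simp add: m_assoc)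
      ultimately show "b \<otimes> d = d \<otimes> b" using bc dc by simp
    qed
    then show "b \<in> {x \<in> D. \<forall>d\<in>D. x \<otimes> d = d \<otimes> x}" using c0 B0 by blast
  qed
  then have "finite B0'" using Zfin finite_subset by blast
  then show False using B0'inf by blast
qed

end

lemma arith_final:
  fixes a b u v e R :: real
  assumes "4 * (a + b) < e * R" "R \<le> u" "R \<le> v" "0 \<le> a" "0 \<le> b" "0 < e" "1 \<le> R"
  shows "2 * a * u + 2 * b * v < e * (u * v)"
proof -
  have u0: "0 < u" "0 < v" using assms by linarith+
  have "e * R \<le> e * v" using assms by (intro mult_left_mono) auto
  moreover have "4 * (a + b) = 4 * a + 4 * b" by simp
  ultimately have "4 * a < e * v" using assms by linarith
  then have h1: "4 * a * u < e * v * u" using u0 by (intro mult_strict_right_mono) auto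
  have "e * R \<le> e * u" using assms by (intro mult_left_mono) auto
  moreover have "4 * (a + b) = 4 * a + 4 * b" by simp
  ultimately have "4 * b < e * u" using assms by linarith
  then have h2: "4 * b * v < e * u * v" using u0 by (intro mult_strict_right_mono) auto
  have "4 * a * u + 4 * b * v < 2 * (e * (u * v))" using h1 h2 by (simp add: algebra_simps)
  then show ?thesis by (simp add: algebra_simps)
qed

context group begin

lemma Q_case:
  assumes rf: "residually_finite G" and D: "subgroup D G" "finite (rcosets D)"
    and SA: "finite SA" "SA \<subseteq> carrier G" and A0def: "A0 = generate G SA" and A0D: "A0 \<subseteq> D"
    and B0: "subgroup B0 G" "B0 \<subseteq> D" and SB: "finite SB" "SB \<subseteq> B0"
    and comm: "\<And>a b. a \<in> A0 \<Longrightarrow> b \<in> B0 \<Longrightarrow> a \<otimes> b = b \<otimes> a"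
    and E: "generate G (A0 \<union> SB) = D"
    and dec: "\<And>d. d \<in> D \<Longrightarrow> \<exists>a\<in>A0. \<exists>b\<in>B0. d = a \<otimes> b"
    and Ainf: "infinite A0"
    and Q: "\<And>R. \<exists>N V. N \<lhd> G \<and> finite (rcosets N) \<and> V \<subseteq> B0 \<and> finite V \<and> \<one> \<in> V \<and>
        (\<forall>v1\<in>V. \<forall>v2\<in>V. \<forall>c\<in>A0. v1 \<otimes> inv v2 \<otimes> inv c \<in> N \<inter> D \<longrightarrow> v1 = v2) \<and> R \<le> card V"
    and eps: "0 < \<epsilon>"
  shows "\<exists>L Y. subgroup L G \<and> finite (rcosets L) \<and> finite Y \<and> Y \<subseteq> L \<and> generate G Y = L
           \<and> real (card Y) < \<epsilon> * real (card (rcosets L))"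
proof -
  have Dc: "D \<subseteq> carrier G" using D subgroup.subset by blast
  have A0sg: "subgroup A0 G" unfolding A0def using generate_is_subgroup[OF SA(2)] .
  have Ac: "A0 \<subseteq> carrier G" and Bc: "B0 \<subseteq> carrier G" using A0D B0 Dc by auto
  define R where "R = nat \<lceil>4 * real (card SA + card SB) / \<epsilon>\<rceil> + 1"
  have eR: "4 * (real (card SA) + real (card SB)) < \<epsilon> * real R"
  proof -
    have "4 * real (card SA + card SB) / \<epsilon> < real R" unfolding R_def by linarith
    then show ?thesis using eps by (simp add: field_simps)
  qed
  have R1: "1 \<le> R" unfolding R_def by simp
  obtain N1 V1 where NV1: "N1 \<lhd> G" "finite (rcosets N1)" "V1 \<subseteq> B0" "finite V1" "\<one> \<in> V1"
      "\<forall>v1\<in>V1. \<forall>v2\<in>V1. \<forall>c\<in>A0. v1 \<otimes> inv v2 \<otimes> inv c \<in> N1 \<inter> D \<longrightarrow> v1 = v2" "R \<le> card V1"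
    using Q[of R] by blast
  have "infinite (A0 - {\<one>})" using Ainf by simp
  then obtain F' where F': "F' \<subseteq> A0 - {\<one>}" "finite F'" "card F' = R" using infinite_arbitrarily_large by blast
  define F where "F = insert \<one> F'"
  have F4: "R \<le> card F" unfolding F_def using F' card_insert_le[of F' \<one>] by simp
  have F: "F \<subseteq> A0" "finite F" "\<one> \<in> F" "R \<le> card F"
    unfolding F_def using F' subgroup.one_closed[OF A0sg] F4 F_def by auto
  have Fc: "F \<subseteq> carrier G" using F Ac by blast
  define Xs where "Xs = (\<lambda>p. fst p \<otimes> inv (snd p)) ` {p \<in> F \<times> F. fst p \<noteq> snd p}"
  have Xs1: "finite Xs" "Xs \<subseteq> carrier G" unfolding Xs_def using F Fc by (auto intro!: m_closed inv_closed)
  have Xs2: "\<one> \<notin> Xs"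
  proof
    assume "\<one> \<in> Xs"
    then obtain f1 f2 where ff: "f1 \<in> F" "f2 \<in> F" "f1 \<noteq> f2" "f1 \<otimes> inv f2 = \<one>" unfolding Xs_def by auto
    have c: "f1 \<in> carrier G" "f2 \<in> carrier G" using ff Fc by blast+
    then have "f1 = f1 \<otimes> inv f2 \<otimes> f2" by (simp add: m_assoc)
    then have "f1 = f2" using ff c by simp
    then show False using ff by blast
  qed
  obtain N2 where N2: "N2 \<lhd> G" "finite (rcosets N2)" "Xs \<inter> N2 = {}" using rf_avoid[OF rf Xs1 Xs2] by blast
  have Nfi: "N1 \<inter> N2 \<lhd> G \<and> finite (rcosets (N1 \<inter> N2))" using normal_fi_inter[OF NV1(1,2) N2(1,2)] .
  define N where "N = N1 \<inter> N2"
  have N: "N \<lhd> G" "finite (rcosets N)" using Nfi unfolding N_def by blast+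
  define L where "L = N \<inter> D"
  have Nsg: "subgroup N G" using normal_imp_subgroup[OF N(1)] .
  have Lsg: "subgroup L G" unfolding L_def using subgroups_Inter_pair[OF Nsg D(1)] .
  have Lfi: "finite (rcosets L)" unfolding L_def using fin_index_inter[OF Nsg N(2) D] .
  have Lc: "L \<subseteq> carrier G" using Lsg subgroup.subset by blast
  have conjD: "g \<otimes> l \<otimes> inv g \<in> L" if "g \<in> D" "l \<in> L" for g l
  proof -
    have gc: "g \<in> carrier G" using that Dc by auto
    have lN: "l \<in> N" "l \<in> D" using that unfolding L_def by auto
    have "g \<otimes> l \<otimes> inv g \<in> N" using normal_invE(2)[OF N(1) gc lN(1)] .
    moreover have "g \<otimes> l \<otimes> inv g \<in> D" using that lN subgroup.m_closed[OF D(1)] subgroup.m_inv_closed[OF D(1)] by blast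
    ultimately show ?thesis unfolding L_def by blast
  qed
  have conj: "c \<otimes> l \<otimes> inv c \<in> L" if "c \<in> A0" "l \<in> L" for c l using conjD that A0D by blast
  have Fsep: "\<forall>t1\<in>F. \<forall>t2\<in>F. t1 \<otimes> inv t2 \<in> L \<longrightarrow> t1 = t2"
  proof (intro ballI impI)
    fix t1 t2 assume t: "t1 \<in> F" "t2 \<in> F" "t1 \<otimes> inv t2 \<in> L"
    show "t1 = t2"
    proof (rule ccontr)
      assume "t1 \<noteq> t2"
      then have "t1 \<otimes> inv t2 \<in> Xs" unfolding Xs_def using t by force
      moreover have "t1 \<otimes> inv t2 \<in> N2" using t unfolding L_def N_def by blast
      ultimately show False using N2(3) by blast
    qed
  qed
  obtain U where U: "F \<subseteq> U" "U \<subseteq> A0" "finite U" "\<forall>t1\<in>U. \<forall>t2\<in>U. t1 \<otimes> inv t2 \<in> L \<longrightarrow> t1 = t2"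
      "\<forall>w\<in>A0. \<exists>t\<in>U. w \<otimes> inv t \<in> L"
    using U_exists[OF Lsg Lfi Ac F(1,2) Fsep] by blast
  have V1sep: "\<forall>t1\<in>V1. \<forall>t2\<in>V1. \<forall>c\<in>A0. t1 \<otimes> inv t2 \<otimes> inv c \<in> L \<longrightarrow> t1 = t2"
  proof -
    have "L \<subseteq> N1 \<inter> D" unfolding L_def N_def by blast
    then show ?thesis using NV1(6) by blast
  qed
  obtain V where V: "V1 \<subseteq> V" "V \<subseteq> B0" "finite V"
      "\<forall>t1\<in>V. \<forall>t2\<in>V. \<forall>c\<in>A0. t1 \<otimes> inv t2 \<otimes> inv c \<in> L \<longrightarrow> t1 = t2"
      "\<forall>w\<in>B0. \<exists>t\<in>V. \<exists>c\<in>A0. w \<otimes> inv t \<otimes> inv c \<in> L"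
    using V_exists[OF Lsg Lfi Bc A0sg conj NV1(3,4) V1sep] by blast
  have Vcov: "\<exists>v\<in>V. \<exists>c\<in>A0. x \<otimes> inv v \<otimes> inv c \<in> L" if xg: "x \<in> generate G (A0 \<union> SB)" for x
  proof -
    have "x \<in> D" using xg E by blast
    then obtain a b where ab: "a \<in> A0" "b \<in> B0" "x = a \<otimes> b" using dec by blast
    obtain v c where vc: "v \<in> V" "c \<in> A0" "b \<otimes> inv v \<otimes> inv c \<in> L" using V(5) ab by blast
    have c: "a \<in> carrier G" "b \<in> carrier G" "v \<in> carrier G" "c \<in> carrier G" using ab vc V Ac Bc by auto
    have "a \<otimes> (b \<otimes> inv v \<otimes> inv c) \<otimes> inv a \<in> L" using conj ab vc by blast
    moreover have "a \<otimes> (b \<otimes> inv v \<otimes> inv c) \<otimes> inv a = x \<otimes> inv v \<otimes> inv (a \<otimes> c)"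
      using c ab by (simp add: m_assoc inv_mult_group)
    moreover have "a \<otimes> c \<in> A0" using ab vc subgroup.m_closed[OF A0sg] by blast
    ultimately show ?thesis using vc by auto
  qed
  have HA: "subgroup (A0 \<inter> L) G" using subgroups_Inter_pair[OF A0sg Lsg] .
  obtain YA where YA: "finite YA" "YA \<subseteq> A0 \<inter> L" "generate G YA = A0 \<inter> L" "card YA \<le> card U * (2 * card SA)"
  proof -
    have "\<exists>Y. finite Y \<and> Y \<subseteq> A0 \<inter> L \<and> generate G Y = A0 \<inter> L \<and> card Y \<le> card U * (2 * card SA)"
    proof (rule schreier[OF SA HA])
      show "A0 \<inter> L \<subseteq> generate G SA" using A0def by blast
      show "finite U" using U by blast
      show "U \<subseteq> generate G SA" using U A0def by blast
      show "\<one> \<in> U" using U F by blast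
    next
      fix x assume x: "x \<in> generate G SA"
      then obtain t where t: "t \<in> U" "x \<otimes> inv t \<in> L" using U(5) A0def by blast
      have "x \<otimes> inv t \<in> A0" using x t U A0def subgroup.m_closed[OF A0sg] subgroup.m_inv_closed[OF A0sg] by blast
      then show "\<exists>t\<in>U. x \<otimes> inv t \<in> A0 \<inter> L" using t by blast
    next
      fix t1 t2 assume "t1 \<in> U" "t2 \<in> U" "t1 \<otimes> inv t2 \<in> A0 \<inter> L"
      then show "t1 = t2" using U(4) by blast
    qed
    then show ?thesis using that by blast
  qed
  obtain Y where Y: "finite Y" "Y \<subseteq> L" "generate G Y = L" "card Y \<le> card YA + card V * (2 * card SB)"
  proof -
    have "\<exists>Y. finite Y \<and> Y \<subseteq> L \<and> generate G Y = L \<and> card Y \<le> card YA + card V * (2 * card SB)"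
    proof (rule core_gen[OF A0sg B0(1) comm SB Lsg _ U(2) _ _ V(3) V(2) _ _ Vcov _ YA(1) YA(3)])
      show "L \<subseteq> generate G (A0 \<union> SB)" using E unfolding L_def by blast
      show "\<one> \<in> U" using U F by blast
      show "\<And>x. x \<in> A0 \<Longrightarrow> \<exists>u\<in>U. x \<otimes> inv u \<in> L" using U by blast
      show "\<one> \<in> V" using V NV1 by blast
      show "V \<subseteq> generate G (A0 \<union> SB)" using E V B0 by blast
      show "\<And>v1 v2 c. v1 \<in> V \<Longrightarrow> v2 \<in> V \<Longrightarrow> c \<in> A0 \<Longrightarrow> v1 \<otimes> inv v2 \<otimes> inv c \<in> L \<Longrightarrow> v1 = v2" using V by blast
    qed
    then show ?thesis using that by blast
  qed
  have cnt: "card U * card V \<le> card (rcosets L)"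
  proof (rule core_count[OF A0sg B0(1) comm Lsg Lfi U(2) _ V(2)])
    show "\<And>u1 u2. u1 \<in> U \<Longrightarrow> u2 \<in> U \<Longrightarrow> u1 \<otimes> inv u2 \<in> L \<Longrightarrow> u1 = u2" using U by blast
    show "\<And>v1 v2 c. v1 \<in> V \<Longrightarrow> v2 \<in> V \<Longrightarrow> c \<in> A0 \<Longrightarrow> v1 \<otimes> inv v2 \<otimes> inv c \<in> L \<Longrightarrow> v1 = v2" using V by blast
  qed
  have cU: "R \<le> card U" using F(4) card_mono[OF U(3) U(1)] by linarith
  have cV: "R \<le> card V" using NV1(7) card_mono[OF V(3) V(1)] by linarith
  have "real (card Y) \<le> real (card U * (2 * card SA) + card V * (2 * card SB))" using Y(4) YA(4) by linarith
  also have "\<dots> = 2 * real (card SA) * real (card U) + 2 * real (card SB) * real (card V)" by simp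
  also have "\<dots> < \<epsilon> * (real (card U) * real (card V))"
    by (rule arith_final[OF eR]) (use cU cV eps R1 in auto)
  also have "\<dots> \<le> \<epsilon> * real (card (rcosets L))"
    using cnt eps by (intro mult_left_mono) (simp_all add: of_nat_mult[symmetric] del: of_nat_mult)
  finally show ?thesis using Lsg Lfi Y by blast
qed

end

context group begin

lemma product_case:
  assumes rf: "residually_finite G" and D: "subgroup D G" "finite (rcosets D)"
    and SD: "finite SD" "SD \<subseteq> D" "generate G SD = D"
    and A: "subgroup A G" "A \<subseteq> D" and B: "subgroup B G" "B \<subseteq> D"
    and commAB: "\<And>a b. a \<in> A \<Longrightarrow> b \<in> B \<Longrightarrow> a \<otimes> b = b \<otimes> a"
    and decAB: "\<And>d. d \<in> D \<Longrightarrow> \<exists>a\<in>A. \<exists>b\<in>B. d = a \<otimes> b"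
    and Ainf: "infinite A" and Binf: "infinite B"
    and Zfin: "finite {x \<in> D. \<forall>d\<in>D. x \<otimes> d = d \<otimes> x}"
    and eps: "0 < \<epsilon>"
  shows "\<exists>L Y. subgroup L G \<and> finite (rcosets L) \<and> finite Y \<and> Y \<subseteq> L \<and> generate G Y = L
           \<and> real (card Y) < \<epsilon> * real (card (rcosets L))"
proof -
  have Dc: "D \<subseteq> carrier G" using D subgroup.subset by blast
  have Ac: "A \<subseteq> carrier G" and Bc: "B \<subseteq> carrier G" using A B Dc by auto
  define pr where "pr y = (SOME p. fst p \<in> A \<and> snd p \<in> B \<and> y = fst p \<otimes> snd p)" for y
  have pr: "fst (pr y) \<in> A \<and> snd (pr y) \<in> B \<and> y = fst (pr y) \<otimes> snd (pr y)" if yS: "y \<in> SD" for y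
  proof -
    have "y \<in> D" using yS SD by blast
    then obtain a b where "a \<in> A" "b \<in> B" "y = a \<otimes> b" using decAB by blast
    then have "\<exists>p. fst p \<in> A \<and> snd p \<in> B \<and> y = fst p \<otimes> snd p" by (intro exI[of _ "(a,b)"]) simp
    then show ?thesis unfolding pr_def by (rule someI_ex)
  qed
  define SA where "SA = (\<lambda>y. fst (pr y)) ` SD"
  define SB where "SB = (\<lambda>y. snd (pr y)) ` SD"
  have SAA: "SA \<subseteq> A" and SBB: "SB \<subseteq> B" unfolding SA_def SB_def using pr by auto
  have SAfin: "finite SA" and SBfin: "finite SB" unfolding SA_def SB_def using SD by auto
  have SAc: "SA \<subseteq> carrier G" and SBc: "SB \<subseteq> carrier G" using SAA SBB Ac Bc by auto
  define A0 where "A0 = generate G SA"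
  define B0 where "B0 = generate G SB"
  have A0sg: "subgroup A0 G" unfolding A0_def using generate_is_subgroup[OF SAc] .
  have B0sg: "subgroup B0 G" unfolding B0_def using generate_is_subgroup[OF SBc] .
  have A0A: "A0 \<subseteq> A" unfolding A0_def using generate_subgroup_incl[OF SAA A(1)] .
  have B0B: "B0 \<subseteq> B" unfolding B0_def using generate_subgroup_incl[OF SBB B(1)] .
  have A0D: "A0 \<subseteq> D" and B0D: "B0 \<subseteq> D" using A0A B0B A B by auto
  have A0c: "A0 \<subseteq> carrier G" and B0c: "B0 \<subseteq> carrier G" using A0D B0D Dc by auto
  have SBB0: "SB \<subseteq> B0" unfolding B0_def using generate.incl[of _ SB G] by blast
  have comm: "\<And>a b. a \<in> A0 \<Longrightarrow> b \<in> B0 \<Longrightarrow> a \<otimes> b = b \<otimes> a" using commAB A0A B0B by blast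
  have E: "generate G (A0 \<union> SB) = D"
  proof
    show "generate G (A0 \<union> SB) \<subseteq> D" using generate_subgroup_incl[OF _ D(1)] A0D SBB B by blast
    have Esg: "subgroup (generate G (A0 \<union> SB)) G" using generate_is_subgroup A0c SBc by blast
    have "SD \<subseteq> generate G (A0 \<union> SB)"
    proof
      fix y assume y: "y \<in> SD"
      have "fst (pr y) \<in> A0" unfolding A0_def SA_def using y by (intro generate.incl) blast
      then have "fst (pr y) \<in> generate G (A0 \<union> SB)" by (intro generate.incl) blast
      moreover have "snd (pr y) \<in> generate G (A0 \<union> SB)" unfolding SB_def using y by (intro generate.incl) blast
      ultimately have "fst (pr y) \<otimes> snd (pr y) \<in> generate G (A0 \<union> SB)" by (rule generate.eng)
      then show "y \<in> generate G (A0 \<union> SB)" using pr[OF y] by simp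
    qed
    then show "D \<subseteq> generate G (A0 \<union> SB)" using generate_subgroup_incl[OF _ Esg] SD(3) by blast
  qed
  have dec0: "\<exists>a\<in>A0. \<exists>b\<in>B0. d = a \<otimes> b" if "d \<in> D" for d
  proof -
    have "d \<in> generate G (A0 \<union> SB)" using that E by blast
    then show ?thesis
    proof (induction d rule: generate.induct)
      case one
      then show ?case using subgroup.one_closed[OF A0sg] subgroup.one_closed[OF B0sg] by force
    next
      case (incl h)
      then show ?case
      proof
        assume h: "h \<in> A0"
        then show ?thesis using subgroup.one_closed[OF B0sg] A0c by (intro bexI[of _ h] bexI[of _ \<one>]) auto
      next
        assume h: "h \<in> SB"
        then show ?thesis using subgroup.one_closed[OF A0sg] SBB0 SBc by (intro bexI[of _ \<one>] bexI[of _ h]) auto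
      qed
    next
      case (inv h)
      then show ?case
      proof
        assume h: "h \<in> A0"
        then have "inv h \<in> A0" using subgroup.m_inv_closed[OF A0sg] by blast
        then show ?thesis using subgroup.one_closed[OF B0sg] A0c by (intro bexI[of _ "inv h"] bexI[of _ \<one>]) auto
      next
        assume h: "h \<in> SB"
        then have "inv h \<in> B0" using SBB0 subgroup.m_inv_closed[OF B0sg] by blast
        then show ?thesis using subgroup.one_closed[OF A0sg] B0c by (intro bexI[of _ \<one>] bexI[of _ "inv h"]) auto
      qed
    next
      case (eng h1 h2)
      obtain a1 b1 where 1: "a1 \<in> A0" "b1 \<in> B0" "h1 = a1 \<otimes> b1" using eng.IH(1) by blast
      obtain a2 b2 where 2: "a2 \<in> A0" "b2 \<in> B0" "h2 = a2 \<otimes> b2" using eng.IH(2) by blast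
      have c: "a1 \<in> carrier G" "b1 \<in> carrier G" "a2 \<in> carrier G" "b2 \<in> carrier G" using 1 2 A0c B0c by auto
      have "h1 \<otimes> h2 = a1 \<otimes> (b1 \<otimes> a2) \<otimes> b2" using 1 2 c by (simp add: m_assoc)
      also have "b1 \<otimes> a2 = a2 \<otimes> b1" using comm[OF 2(1) 1(2)] by simp
      also have "a1 \<otimes> (a2 \<otimes> b1) \<otimes> b2 = (a1 \<otimes> a2) \<otimes> (b1 \<otimes> b2)" using c by (simp add: m_assoc)
      finally show ?case using 1 2 subgroup.m_closed[OF A0sg] subgroup.m_closed[OF B0sg] by blast
    qed
  qed
  have ABZ: "A \<inter> B \<subseteq> {x \<in> D. \<forall>d\<in>D. x \<otimes> d = d \<otimes> x}"
  proof
    fix x assume x: "x \<in> A \<inter> B"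
    have xc: "x \<in> carrier G" using x Ac by blast
    have "\<forall>d\<in>D. x \<otimes> d = d \<otimes> x"
    proof
      fix d assume "d \<in> D"
      then obtain a b where ab: "a \<in> A" "b \<in> B" "d = a \<otimes> b" using decAB by blast
      have c: "a \<in> carrier G" "b \<in> carrier G" using ab Ac Bc by auto
      have "x \<otimes> (a \<otimes> b) = (x \<otimes> a) \<otimes> b" using c xc by (simp add: m_assoc)
      also have "x \<otimes> a = a \<otimes> x" using commAB[of a x] ab x by simp
      also have "(a \<otimes> x) \<otimes> b = a \<otimes> (x \<otimes> b)" using c xc by (simp add: m_assoc)
      also have "x \<otimes> b = b \<otimes> x" using commAB[of x b] ab x by simp
      also have "a \<otimes> (b \<otimes> x) = (a \<otimes> b) \<otimes> x" using c xc by (simp add: m_assoc)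
      finally show "x \<otimes> d = d \<otimes> x" using ab by simp
    qed
    then show "x \<in> {x \<in> D. \<forall>d\<in>D. x \<otimes> d = d \<otimes> x}" using x A by blast
  qed
  have ABfin: "finite (A \<inter> B)" using finite_subset[OF ABZ Zfin] .
  have A0inf: "infinite A0"
  proof
    assume fin: "finite A0"
    have "A \<subseteq> (\<lambda>(a,c). a \<otimes> c) ` (A0 \<times> (A \<inter> B))"
    proof
      fix x assume x: "x \<in> A"
      then obtain a b where ab: "a \<in> A0" "b \<in> B0" "x = a \<otimes> b" using dec0 A by blast
      have c: "a \<in> carrier G" "b \<in> carrier G" using ab A0c B0c by auto
      have "b = inv a \<otimes> x" using ab c by simp
      moreover have "inv a \<otimes> x \<in> A" using x ab A0A subgroup.m_closed[OF A(1)] subgroup.m_inv_closed[OF A(1)] by blast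
      ultimately have "b \<in> A \<inter> B" using ab B0B by auto
      then show "x \<in> (\<lambda>(a,c). a \<otimes> c) ` (A0 \<times> (A \<inter> B))" using ab by force
    qed
    then show False using Ainf fin ABfin finite_subset by blast
  qed
  have B0inf: "infinite B0"
  proof
    assume fin: "finite B0"
    have "B \<subseteq> (\<lambda>(a,c). a \<otimes> c) ` ((A \<inter> B) \<times> B0)"
    proof
      fix x assume x: "x \<in> B"
      then obtain a b where ab: "a \<in> A0" "b \<in> B0" "x = a \<otimes> b" using dec0 B by blast
      have c: "a \<in> carrier G" "b \<in> carrier G" using ab A0c B0c by auto
      have "a = x \<otimes> inv b" using ab c by (simp add: m_assoc)
      moreover have "x \<otimes> inv b \<in> B" using x ab B0B subgroup.m_closed[OF B(1)] subgroup.m_inv_closed[OF B(1)] by blast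
      ultimately have "a \<in> A \<inter> B" using ab A0A by auto
      then show "x \<in> (\<lambda>(a,c). a \<otimes> c) ` ((A \<inter> B) \<times> B0)" using ab by force
    qed
    then show False using Binf fin ABfin finite_subset by blast
  qed
  show ?thesis
  proof (cases "\<forall>R. \<exists>N V. N \<lhd> G \<and> finite (rcosets N) \<and> V \<subseteq> B0 \<and> finite V \<and> \<one> \<in> V \<and>
        (\<forall>v1\<in>V. \<forall>v2\<in>V. \<forall>c\<in>A0. v1 \<otimes> inv v2 \<otimes> inv c \<in> N \<inter> D \<longrightarrow> v1 = v2) \<and> R \<le> card V")
    case True
    show ?thesis
      apply (rule Q_case[OF rf D SAfin SAc A0_def A0D B0sg B0D SBfin SBB0 _ E _ A0inf _ eps])
        apply (erule (1) comm)
       apply (erule dec0)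
      apply (rule True[rule_format])
      done
  next
    case False
    then obtain R0 where R0: "\<And>N V. N \<lhd> G \<Longrightarrow> finite (rcosets N) \<Longrightarrow> V \<subseteq> B0 \<Longrightarrow> finite V \<Longrightarrow> \<one> \<in> V \<Longrightarrow>
        (\<forall>v1\<in>V. \<forall>v2\<in>V. \<forall>c\<in>A0. v1 \<otimes> inv v2 \<otimes> inv c \<in> N \<inter> D \<longrightarrow> v1 = v2) \<Longrightarrow> \<not> R0 \<le> card V"
      by blast
    have False
      apply (rule notQ_contra[OF rf D(1) A0sg A0D B0sg B0D _ _ B0inf Zfin, of R0])
        apply (erule (1) comm)
       apply (erule dec0)
      using R0 by (simp add: not_le)
    then show ?thesis ..
  qed
qed

end

context group begin

lemma fg_sub:
  assumes S: "finite S" "S \<subseteq> carrier G" "generate G S = carrier G"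
    and H: "subgroup H G" "finite (rcosets H)"
  shows "\<exists>Y. finite Y \<and> Y \<subseteq> H \<and> generate G Y = H"
proof -
  have T0: "{\<one>} \<subseteq> carrier G" "finite {\<one>}" "\<forall>t1\<in>{\<one>}. \<forall>t2\<in>{\<one>}. t1 \<otimes> inv t2 \<in> H \<longrightarrow> t1 = t2" by auto
  obtain T where T: "{\<one>} \<subseteq> T" "T \<subseteq> carrier G" "finite T" "\<forall>t1\<in>T. \<forall>t2\<in>T. t1 \<otimes> inv t2 \<in> H \<longrightarrow> t1 = t2"
      "\<forall>w\<in>carrier G. \<exists>t\<in>T. w \<otimes> inv t \<in> H"
    using U_exists[OF H subset_refl T0] by blast
  have "\<exists>Y. finite Y \<and> Y \<subseteq> H \<and> generate G Y = H \<and> card Y \<le> card T * (2 * card S)"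
  proof (rule schreier[OF S(1,2) H(1)])
    show "H \<subseteq> generate G S" using S(3) H(1) subgroup.subset by blast
    show "finite T" "T \<subseteq> generate G S" "\<one> \<in> T" using T S(3) by auto
    show "\<And>x. x \<in> generate G S \<Longrightarrow> \<exists>t\<in>T. x \<otimes> inv t \<in> H" using T S(3) by blast
    show "\<And>t1 t2. t1 \<in> T \<Longrightarrow> t2 \<in> T \<Longrightarrow> t1 \<otimes> inv t2 \<in> H \<Longrightarrow> t1 = t2" using T by blast
  qed
  then show ?thesis by blast
qed

lemma min_gen_ge1:
  assumes S: "finite S" "S \<subseteq> carrier G" "generate G S = carrier G"
    and inf: "infinite (carrier G)" and H: "finite_index_subgroup G H"
  shows "1 \<le> min_generators G H"
proof -
  have Hs: "subgroup H G" "finite (rcosets H)" using H unfolding finite_index_subgroup_def by auto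
  obtain Y where Y: "finite Y" "Y \<subseteq> H" "generate G Y = H" using fg_sub[OF S Hs] by blast
  let ?P = "\<lambda>n. \<exists>S. finite S \<and> S \<subseteq> H \<and> card S = n \<and> generate G S = H"
  have "?P (card Y)" using Y by blast
  then have "?P (min_generators G H)" unfolding min_generators_def by (rule LeastI)
  then obtain S0 where S0: "finite S0" "S0 \<subseteq> H" "card S0 = min_generators G H" "generate G S0 = H" by blast
  show ?thesis
  proof (rule ccontr)
    assume "\<not> 1 \<le> min_generators G H"
    then have "card S0 = 0" using S0 by simp
    then have "S0 = {}" using S0(1) by simp
    then have H1: "H = {\<one>}" using S0(4) generate_empty by simp
    have "\<Union>(rcosets H) = carrier G" using rcosets_part_G[OF Hs(1)] .
    moreover have "\<forall>C\<in>rcosets H. finite C"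
    proof
      fix C assume "C \<in> rcosets H"
      then obtain g where "g \<in> carrier G" "C = H #> g" unfolding RCOSETS_def by blast
      then show "finite C" using H1 unfolding r_coset_def by simp
    qed
    ultimately have "finite (carrier G)" using Hs(2) by (metis finite_Union)
    then show False using inf by blast
  qed
qed

lemma value_bound:
  assumes L: "subgroup L G" "finite (rcosets L)" and Y: "finite Y" "Y \<subseteq> L" "generate G Y = L"
    and lt: "real (card Y) < e * real (card (rcosets L))"
  shows "(real (min_generators G L) - 1) / real (group_index G L) < e"
proof -
  have le: "min_generators G L \<le> card Y" unfolding min_generators_def
    by (rule Least_le) (use Y in blast)
  have pos: "0 < card (rcosets L)"
  proof -
    have "\<Union>(rcosets L) = carrier G" using rcosets_part_G[OF L(1)] .
    then have "rcosets L \<noteq> {}" by auto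
    then show ?thesis using L(2) by (simp add: card_gt_0_iff)
  qed
  have "(real (min_generators G L) - 1) / real (group_index G L) \<le> real (card Y) / real (card (rcosets L))"
    unfolding group_index_def using le pos by (intro divide_right_mono) auto
  also have "\<dots> < e" using lt pos by (simp add: divide_less_eq)
  finally show ?thesis .
qed

lemma main_group:
  assumes rf: "residually_finite G"
    and S: "finite S" "S \<subseteq> carrier G" "generate G S = carrier G"
    and inf: "infinite (carrier G)"
    and D: "subgroup D G" "finite (rcosets D)"
    and A: "subgroup A G" "A \<subseteq> D" and B: "subgroup B G" "B \<subseteq> D"
    and commAB: "\<And>a b. a \<in> A \<Longrightarrow> b \<in> B \<Longrightarrow> a \<otimes> b = b \<otimes> a"
    and decAB: "\<And>d. d \<in> D \<Longrightarrow> \<exists>a\<in>A. \<exists>b\<in>B. d = a \<otimes> b"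
    and Ainf: "infinite A" and Binf: "infinite B"
  shows "rank_gradient G = 0"
proof -
  define Xs where "Xs = {(real (min_generators G H) - 1) / real (group_index G H) | H. finite_index_subgroup G H}"
  obtain SD where SD: "finite SD" "SD \<subseteq> D" "generate G SD = D" using fg_sub[OF S D] by blast
  have small: "\<exists>x\<in>Xs. x < e" if e: "0 < e" for e
  proof -
    have "\<exists>L Y. subgroup L G \<and> finite (rcosets L) \<and> finite Y \<and> Y \<subseteq> L \<and> generate G Y = L
           \<and> real (card Y) < e * real (card (rcosets L))"
    proof (cases "finite {x \<in> D. \<forall>d\<in>D. x \<otimes> d = d \<otimes> x}")
      case True
      show ?thesis
        apply (rule product_case[OF rf D SD A B _ _ Ainf Binf True e])
         apply (erule (1) commAB)
        apply (erule decAB)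
        done
    next
      case False
      show ?thesis using central_case[OF rf D SD False e] .
    qed
    then obtain L Y where LY: "subgroup L G" "finite (rcosets L)" "finite Y" "Y \<subseteq> L" "generate G Y = L"
        "real (card Y) < e * real (card (rcosets L))" by blast
    have "(real (min_generators G L) - 1) / real (group_index G L) < e" using value_bound[OF LY] .
    moreover have "finite_index_subgroup G L" unfolding finite_index_subgroup_def using LY by blast
    ultimately show ?thesis unfolding Xs_def by blast
  qed
  have nonneg: "0 \<le> x" if xX: "x \<in> Xs" for x
  proof -
    obtain H where H: "finite_index_subgroup G H" "x = (real (min_generators G H) - 1) / real (group_index G H)"
      using xX unfolding Xs_def by blast
    have "1 \<le> min_generators G H" using min_gen_ge1[OF S inf H(1)] .
    then show ?thesis using H(2) by simp
  qed
  have ne: "Xs \<noteq> {}"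
  proof -
    have "finite_index_subgroup G (carrier G)" unfolding finite_index_subgroup_def
      using subgroup_self fin_index_carrier by blast
    then show ?thesis unfolding Xs_def by blast
  qed
  have bdd: "bdd_below Xs" using nonneg by (intro bdd_belowI) blast
  have ge: "0 \<le> Inf Xs" using ne nonneg by (intro cInf_greatest) auto
  have le: "Inf Xs \<le> 0"
  proof (rule ccontr)
    assume "\<not> Inf Xs \<le> 0"
    then have "0 < Inf Xs" by simp
    then obtain x where "x \<in> Xs" "x < Inf Xs" using small by blast
    moreover have "Inf Xs \<le> x" using cInf_lower[OF \<open>x \<in> Xs\<close> bdd] .
    ultimately show False by simp
  qed
  show ?thesis unfolding rank_gradient_def using ge le unfolding Xs_def by simp
qed

end

lemma (in group) main_phi:
  fixes G1 :: "('c, 'd) monoid_scheme" and G2 :: "('e, 'f) monoid_scheme"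
    and phi :: "'c \<times> 'e \<Rightarrow> 'a"
  assumes "group G"
    and "finitely_generated G"
    and "residually_finite G"
    and "presentable_by_product_via G G1 G2 phi"
  shows "rank_gradient G = 0"
proof -
  have inf: "infinite (carrier G)" and G1: "group G1" and G2: "group G2"
    and hom: "phi \<in> hom (G1 \<times>\<times> G2) G"
    and Dfi: "finite_index_subgroup G (phi ` carrier (G1 \<times>\<times> G2))"
    and Ainf: "infinite (phi ` (carrier G1 \<times> {\<one>\<^bsub>G2\<^esub>}))"
    and Binf: "infinite (phi ` ({\<one>\<^bsub>G1\<^esub>} \<times> carrier G2))"
    using assms(4) unfolding presentable_by_product_via_def by auto
  have G12: "group (G1 \<times>\<times> G2)" using DirProd_group[OF G1 G2] .
  interpret h: group_hom "G1 \<times>\<times> G2" G phi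
    using G12 hom assms(1) by (simp add: group_hom_def group_hom_axioms_def)
  obtain S where S: "finite S" "S \<subseteq> carrier G" "generate G S = carrier G"
    using assms(2) unfolding finitely_generated_def by blast
  define D where "D = phi ` carrier (G1 \<times>\<times> G2)"
  define A where "A = phi ` (carrier G1 \<times> {\<one>\<^bsub>G2\<^esub>})"
  define B where "B = phi ` ({\<one>\<^bsub>G1\<^esub>} \<times> carrier G2)"
  have D: "subgroup D G" "finite (rcosets D)" using Dfi unfolding D_def finite_index_subgroup_def by auto
  have sA: "subgroup (carrier G1 \<times> {\<one>\<^bsub>G2\<^esub>}) (G1 \<times>\<times> G2)"
    using DirProd_subgroups[OF G1 group.subgroup_self[OF G1] G2 group.triv_subgroup[OF G2]] .
  have sB: "subgroup ({\<one>\<^bsub>G1\<^esub>} \<times> carrier G2) (G1 \<times>\<times> G2)"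
    using DirProd_subgroups[OF G1 group.triv_subgroup[OF G1] G2 group.subgroup_self[OF G2]] .
  have A: "subgroup A G" "A \<subseteq> D" unfolding A_def D_def using h.subgroup_img_is_subgroup[OF sA]
    monoid.one_closed[OF group.is_monoid[OF G2]] by auto
  have B: "subgroup B G" "B \<subseteq> D" unfolding B_def D_def using h.subgroup_img_is_subgroup[OF sB]
    monoid.one_closed[OF group.is_monoid[OF G1]] by auto
  have split: "phi (g1, g2) = phi (g1, \<one>\<^bsub>G2\<^esub>) \<otimes> phi (\<one>\<^bsub>G1\<^esub>, g2)"
    "phi (g1, g2) = phi (\<one>\<^bsub>G1\<^esub>, g2) \<otimes> phi (g1, \<one>\<^bsub>G2\<^esub>)"
    if "g1 \<in> carrier G1" "g2 \<in> carrier G2" for g1 g2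
  proof -
    have o1: "\<one>\<^bsub>G1\<^esub> \<in> carrier G1" and o2: "\<one>\<^bsub>G2\<^esub> \<in> carrier G2"
      using monoid.one_closed[OF group.is_monoid[OF G1]] monoid.one_closed[OF group.is_monoid[OF G2]] by auto
    have "phi ((g1, \<one>\<^bsub>G2\<^esub>) \<otimes>\<^bsub>G1 \<times>\<times> G2\<^esub> (\<one>\<^bsub>G1\<^esub>, g2)) = phi (g1, \<one>\<^bsub>G2\<^esub>) \<otimes> phi (\<one>\<^bsub>G1\<^esub>, g2)"
      using that o1 o2 by (intro h.hom_mult) auto
    moreover have "(g1, \<one>\<^bsub>G2\<^esub>) \<otimes>\<^bsub>G1 \<times>\<times> G2\<^esub> (\<one>\<^bsub>G1\<^esub>, g2) = (g1, g2)"
      using that monoid.r_one[OF group.is_monoid[OF G1]] monoid.l_one[OF group.is_monoid[OF G2]] by simp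
    ultimately show "phi (g1, g2) = phi (g1, \<one>\<^bsub>G2\<^esub>) \<otimes> phi (\<one>\<^bsub>G1\<^esub>, g2)" by simp
    have "phi ((\<one>\<^bsub>G1\<^esub>, g2) \<otimes>\<^bsub>G1 \<times>\<times> G2\<^esub> (g1, \<one>\<^bsub>G2\<^esub>)) = phi (\<one>\<^bsub>G1\<^esub>, g2) \<otimes> phi (g1, \<one>\<^bsub>G2\<^esub>)"
      using that o1 o2 by (intro h.hom_mult) auto
    moreover have "(\<one>\<^bsub>G1\<^esub>, g2) \<otimes>\<^bsub>G1 \<times>\<times> G2\<^esub> (g1, \<one>\<^bsub>G2\<^esub>) = (g1, g2)"
      using that monoid.l_one[OF group.is_monoid[OF G1]] monoid.r_one[OF group.is_monoid[OF G2]] by simp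
    ultimately show "phi (g1, g2) = phi (\<one>\<^bsub>G1\<^esub>, g2) \<otimes> phi (g1, \<one>\<^bsub>G2\<^esub>)" by simp
  qed
  have commAB: "a \<otimes> b = b \<otimes> a" if ab: "a \<in> A" "b \<in> B" for a b
  proof -
    obtain g1 where g1: "g1 \<in> carrier G1" "a = phi (g1, \<one>\<^bsub>G2\<^esub>)" using ab(1) unfolding A_def by blast
    obtain g2 where g2: "g2 \<in> carrier G2" "b = phi (\<one>\<^bsub>G1\<^esub>, g2)" using ab(2) unfolding B_def by blast
    show ?thesis using split[OF g1(1) g2(1)] g1 g2 by simp
  qed
  have decAB: "\<exists>a\<in>A. \<exists>b\<in>B. d = a \<otimes> b" if dD: "d \<in> D" for d
  proof -
    obtain g1 g2 where g: "g1 \<in> carrier G1" "g2 \<in> carrier G2" "d = phi (g1, g2)" using dD unfolding D_def by auto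
    then show ?thesis using split(1)[OF g(1,2)] unfolding A_def B_def by blast
  qed
  show ?thesis
  proof (rule main_group[OF assms(3) S inf D A B _ _ _ _])
    show "\<And>a b. a \<in> A \<Longrightarrow> b \<in> B \<Longrightarrow> a \<otimes> b = b \<otimes> a" using commAB by blast
    show "\<And>d. d \<in> D \<Longrightarrow> \<exists>a\<in>A. \<exists>b\<in>B. d = a \<otimes> b" using decAB by blast
    show "infinite A" using Ainf unfolding A_def .
    show "infinite B" using Binf unfolding B_def .
  qed
qed

theorem proposition4p5:
  fixes G :: "('a, 'b) monoid_scheme"
    and G1 :: "('c, 'd) monoid_scheme" and G2 :: "('e, 'f) monoid_scheme"
    and phi :: "'c \<times> 'e \<Rightarrow> 'a"
  assumes "group G"
    and "finitely_generated G"
    and "residually_finite G"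
    and "presentable_by_product_via G G1 G2 phi"
  shows "rank_gradient G = 0"
  using group.main_phi[OF assms(1) assms] .

end
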